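(* Let $\mathcal{X}=\mathcal{Y}=\{0,1\}$ and let $d:\mathcal{X}\times\mathcal{Y}\to\mathbb{R}_{\mathrm{c}}$ be the single-letter distortion measure given by the matrix $d=\begin{bmatrix}0 & d_{0,1}\\ d_{1,0} & 0\end{bmatrix}$ with $d_{0,1}>0$ and $d_{1,0}>0$ computable. Then there exist a sequence of computable input distributions $(P_{X,n})_{n\in\mathbb{N}}$ in $\mathcal{P}_{\mathrm{c}}(\mathcal{X})$ and a computable sequence of distortion levels $(D_n)_{n\in\mathbb{N}}$ such that no function $F_{\mathrm{opt}}$ computing the sequence of optimal transition probabilities $P^{*}_{Y|X,n}\in\mathcal{P}_{\mathrm{opt}}(d,D_n,P_{X,n})$ is Banach–Mazur computable.
   Context: A real number is computable if it is the effective limit of a computable sequence of rationals (with a recursive modulus of convergence); $\mathbb{R}_{\mathrm{c}}$ denotes the computable reals, a sequence of reals (or vectors/matrices) is computable if this can be done uniformly in the index, and $\mathcal{P}_{\mathrm{c}}(\mathcal{X})$ denotes the probability distributions on $\mathcal{X}$ with computable entries. For a source distribution $P_X$, distortion measure $d$ and level $D$, the rate distortion function is $R(D)=\inf\{I(X;Y): P_{Y|X},\ \sum_{x,y}P_X(x)P_{Y|X}(y|x)d(x,y)\leq D\}$ over all test channels $P_{Y|X}$, and $\mathcal{P}_{\mathrm{opt}}(d,D,P_X)$ is the set of test channels attaining the minimum. A function $F_{\mathrm{opt}}$ mapping inputs (source distribution, distortion level) to an optimal test channel is Banach–Mazur computable if it maps every computable sequence of inputs to a computable sequence of outputs. *)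

theory Defs
  imports Complex_Main
begin

datatype recf = Zero | Succ | Proj nat | Comp recf "recf list" | PrimRec recf recf | Mu recf

inductive eval :: "recf \<Rightarrow> nat list \<Rightarrow> nat \<Rightarrow> bool" where
  eval_Zero: "eval Zero xs 0"
| eval_Succ: "eval Succ (x # xs) (Suc x)"
| eval_Proj: "i < length xs \<Longrightarrow> eval (Proj i) xs (xs ! i)"
| eval_Comp: "list_all2 (\<lambda>g v. eval g xs v) gs ys \<Longrightarrow> eval f ys v \<Longrightarrow> eval (Comp f gs) xs v"
| eval_PR0: "eval f xs v \<Longrightarrow> eval (PrimRec f g) (0 # xs) v"
| eval_PRS: "eval (PrimRec f g) (y # xs) r \<Longrightarrow> eval g (y # r # xs) v
     \<Longrightarrow> eval (PrimRec f g) (Suc y # xs) v"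
| eval_Mu: "eval f (y # xs) 0 \<Longrightarrow> (\<And>z. z < y \<Longrightarrow> \<exists>w>0. eval f (z # xs) w)
     \<Longrightarrow> eval (Mu f) xs y"
monos list.rel_mono

definition computable1 :: "(nat \<Rightarrow> nat) \<Rightarrow> bool" where
  "computable1 f \<longleftrightarrow> (\<exists>t. \<forall>n. eval t [n] (f n))"

definition computable2 :: "(nat \<Rightarrow> nat \<Rightarrow> nat) \<Rightarrow> bool" where
  "computable2 f \<longleftrightarrow> (\<exists>t. \<forall>m n. eval t [m, n] (f m n))"

definition rat_code :: "nat \<Rightarrow> nat \<Rightarrow> nat \<Rightarrow> real" where
  "rat_code a b c = (real a - real b) / (real c + 1)"

definition computable_real :: "real \<Rightarrow> bool" where
  "computable_real x \<longleftrightarrow> (\<exists>a b c e. computable1 a \<and> computable1 b \<and> computable1 c \<and> computable1 e \<and>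
     (\<forall>N k. k \<ge> e N \<longrightarrow> \<bar>rat_code (a k) (b k) (c k) - x\<bar> \<le> 1 / 2 ^ N))"

definition computable_real_seq :: "(nat \<Rightarrow> real) \<Rightarrow> bool" where
  "computable_real_seq x \<longleftrightarrow> (\<exists>a b c e. computable2 a \<and> computable2 b \<and> computable2 c \<and> computable2 e \<and>
     (\<forall>n N k. k \<ge> e n N \<longrightarrow> \<bar>rat_code (a n k) (b n k) (c n k) - x n\<bar> \<le> 1 / 2 ^ N))"

section \<open>Binary alphabets: X = Y = {0,1} modelled as bool (False = 0, True = 1)\<close>

definition is_dist :: "(bool \<Rightarrow> real) \<Rightarrow> bool" where
  "is_dist P \<longleftrightarrow> (\<forall>x. P x \<ge> 0) \<and> (\<Sum>x\<in>UNIV. P x) = 1"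

definition is_channel :: "(bool \<Rightarrow> bool \<Rightarrow> real) \<Rightarrow> bool" where
  "is_channel W \<longleftrightarrow> (\<forall>x. is_dist (W x))"

definition computable_dist :: "(bool \<Rightarrow> real) \<Rightarrow> bool" where
  "computable_dist P \<longleftrightarrow> is_dist P \<and> (\<forall>x. computable_real (P x))"

definition computable_dist_seq :: "(nat \<Rightarrow> bool \<Rightarrow> real) \<Rightarrow> bool" where
  "computable_dist_seq P \<longleftrightarrow> (\<forall>x. computable_real_seq (\<lambda>n. P n x))"

definition computable_channel_seq :: "(nat \<Rightarrow> bool \<Rightarrow> bool \<Rightarrow> real) \<Rightarrow> bool" where
  "computable_channel_seq W \<longleftrightarrow> (\<forall>x y. computable_real_seq (\<lambda>n. W n x y))"

definition bin_dist :: "real \<Rightarrow> real \<Rightarrow> bool \<Rightarrow> bool \<Rightarrow> real" where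
  "bin_dist d01 d10 x y = (if x = y then 0 else if x then d10 else d01)"

definition exp_distortion :: "(bool \<Rightarrow> bool \<Rightarrow> real) \<Rightarrow> (bool \<Rightarrow> real) \<Rightarrow> (bool \<Rightarrow> bool \<Rightarrow> real) \<Rightarrow> real" where
  "exp_distortion d P W = (\<Sum>x\<in>UNIV. \<Sum>y\<in>UNIV. P x * W x y * d x y)"

definition mutual_info :: "(bool \<Rightarrow> real) \<Rightarrow> (bool \<Rightarrow> bool \<Rightarrow> real) \<Rightarrow> real" where
  "mutual_info P W = (\<Sum>x\<in>UNIV. \<Sum>y\<in>UNIV.
      if P x * W x y = 0 then 0
      else P x * W x y * ln (W x y / (\<Sum>x'\<in>UNIV. P x' * W x' y)))"

definition rate_distortion :: "(bool \<Rightarrow> bool \<Rightarrow> real) \<Rightarrow> real \<Rightarrow> (bool \<Rightarrow> real) \<Rightarrow> real" where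
  "rate_distortion d D P = Inf {mutual_info P W | W. is_channel W \<and> exp_distortion d P W \<le> D}"

definition P_opt :: "(bool \<Rightarrow> bool \<Rightarrow> real) \<Rightarrow> real \<Rightarrow> (bool \<Rightarrow> real) \<Rightarrow> (bool \<Rightarrow> bool \<Rightarrow> real) set" where
  "P_opt d D P = {W. is_channel W \<and> exp_distortion d P W \<le> D \<and> mutual_info P W = rate_distortion d D P}"

definition optimal_selector :: "(bool \<Rightarrow> bool \<Rightarrow> real) \<Rightarrow> ((bool \<Rightarrow> real) \<Rightarrow> real \<Rightarrow> (bool \<Rightarrow> bool \<Rightarrow> real)) \<Rightarrow> bool" where
  "optimal_selector d F \<longleftrightarrow> (\<forall>P D. computable_dist P \<and> computable_real D \<and> P_opt d D P \<noteq> {}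
      \<longrightarrow> F P D \<in> P_opt d D P)"

definition BM_computable :: "(bool \<Rightarrow> bool \<Rightarrow> real) \<Rightarrow> ((bool \<Rightarrow> real) \<Rightarrow> real \<Rightarrow> (bool \<Rightarrow> bool \<Rightarrow> real)) \<Rightarrow> bool" where
  "BM_computable d F \<longleftrightarrow> (\<forall>PS DS. (\<forall>n. is_dist (PS n) \<and> P_opt d (DS n) (PS n) \<noteq> {})
      \<and> computable_dist_seq PS \<and> computable_real_seq DS
      \<longrightarrow> computable_channel_seq (\<lambda>n. F (PS n) (DS n)))"

end

theory Submission
  imports Defs
begin


definition rc :: "nat \<Rightarrow> ((nat \<Rightarrow> nat) \<Rightarrow> nat) \<Rightarrow> bool" where
  "rc n f \<longleftrightarrow> (\<exists>t. \<forall>e. eval t (map e [0..<n]) (f e))"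

definition rcp :: "nat \<Rightarrow> ((nat \<Rightarrow> nat) \<Rightarrow> bool) \<Rightarrow> bool" where
  "rcp n P \<longleftrightarrow> rc n (\<lambda>e. if P e then 1 else 0)"

lemma rc_zero: "rc n (\<lambda>e. 0)"
  unfolding rc_def by (auto intro: eval_Zero)

lemma rc_proj: "i < n \<Longrightarrow> rc n (\<lambda>e. e i)"
  unfolding rc_def
  by (rule exI[of _ "Proj i"]) (metis (no_types, lifting) eval_Proj length_map length_upt minus_nat.diff_0 nth_map_upt plus_nat.add_0)

lemma rc_comp:
  assumes "rc m f" and "\<And>i. i < m \<Longrightarrow> rc n (gs i)"
  shows "rc n (\<lambda>e. f (\<lambda>i. gs i e))"
proof -
  obtain tf where tf: "\<And>e. eval tf (map e [0..<m]) (f e)" using assms(1) unfolding rc_def by blast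
  have "\<forall>i<m. \<exists>t. \<forall>e. eval t (map e [0..<n]) (gs i e)" using assms(2) unfolding rc_def by blast
  then obtain ts where ts: "\<And>i e. i < m \<Longrightarrow> eval (ts i) (map e [0..<n]) (gs i e)" by metis
  have "eval (Comp tf (map ts [0..<m])) (map e [0..<n]) (f (\<lambda>i. gs i e))" for e
  proof (rule eval_Comp)
    show "list_all2 (\<lambda>g v. eval g (map e [0..<n]) v) (map ts [0..<m]) (map (\<lambda>i. gs i e) [0..<m])"
      by (auto simp: list_all2_conv_all_nth ts)
    show "eval tf (map (\<lambda>i. gs i e) [0..<m]) (f (\<lambda>i. gs i e))" using tf .
  qed
  then show ?thesis unfolding rc_def by blast
qed

lemma rc_succ1: "rc 1 (\<lambda>e. Suc (e 0))"
  unfolding rc_def by (rule exI[of _ Succ]) (auto intro: eval_Succ)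

lemma rc_lift1: "rc 1 (\<lambda>e. F (e 0)) \<Longrightarrow> rc n g \<Longrightarrow> rc n (\<lambda>e. F (g e))"
  using rc_comp[of 1 "\<lambda>e. F (e 0)" n "\<lambda>i. g"] by simp

lemma rc_lift2: "rc 2 (\<lambda>e. F (e 0) (e 1)) \<Longrightarrow> rc n g \<Longrightarrow> rc n h \<Longrightarrow> rc n (\<lambda>e. F (g e) (h e))"
  using rc_comp[of 2 "\<lambda>e. F (e 0) (e 1)" n "\<lambda>i. if i = 0 then g else h"] by (simp add: less_2_cases_iff)

lemma rc_lift3: "rc 3 (\<lambda>e. F (e 0) (e 1) (e 2)) \<Longrightarrow> rc n g \<Longrightarrow> rc n h \<Longrightarrow> rc n k \<Longrightarrow> rc n (\<lambda>e. F (g e) (h e) (k e))"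
  using rc_comp[of 3 "\<lambda>e. F (e 0) (e 1) (e 2)" n "\<lambda>i. if i = 0 then g else if i = 1 then h else k"]
  by (simp add: numeral_3_eq_3 less_Suc_eq)

lemma rc_suc: "rc n g \<Longrightarrow> rc n (\<lambda>e. Suc (g e))"
  using rc_lift1[OF rc_succ1] .

lemma rc_const: "rc n (\<lambda>e. c)"
  by (induction c) (auto intro: rc_zero rc_suc)

lemma rc_cong: "rc n f \<Longrightarrow> (\<And>e. f e = g e) \<Longrightarrow> rc n g"
proof -
  assume "rc n f" "\<And>e. f e = g e"
  then have "f = g" by auto
  with \<open>rc n f\<close> show ?thesis by simp
qed

definition econs :: "nat \<Rightarrow> (nat \<Rightarrow> nat) \<Rightarrow> nat \<Rightarrow> nat" where
  "econs a e = (\<lambda>i. case i of 0 \<Rightarrow> a | Suc j \<Rightarrow> e j)"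

fun prec :: "((nat \<Rightarrow> nat) \<Rightarrow> nat) \<Rightarrow> ((nat \<Rightarrow> nat) \<Rightarrow> nat) \<Rightarrow> nat \<Rightarrow> (nat \<Rightarrow> nat) \<Rightarrow> nat" where
  "prec f g 0 e = f e"
| "prec f g (Suc y) e = g (econs y (econs (prec f g y e) e))"

lemma map_econs: "map (econs a e) [0..<Suc n] = a # map e [0..<n]"
  by (simp add: econs_def map_upt_Suc del: upt_Suc)

lemma map_upt_Suc0: "map e [0..<Suc n] = e 0 # map (\<lambda>i. e (Suc i)) [0..<n]"
  by (simp add: map_upt_Suc del: upt_Suc)

lemma rc_prec:
  assumes "rc n f" "rc (Suc (Suc n)) g"
  shows "rc (Suc n) (\<lambda>e. prec f g (e 0) (\<lambda>i. e (Suc i)))"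
proof -
  obtain tf where tf: "\<And>e. eval tf (map e [0..<n]) (f e)" using assms(1) unfolding rc_def by blast
  obtain tg where tg: "\<And>e. eval tg (map e [0..<Suc (Suc n)]) (g e)" using assms(2) unfolding rc_def by blast
  have *: "eval (PrimRec tf tg) (y # map e [0..<n]) (prec f g y e)" for y e
  proof (induction y)
    case 0 then show ?case using tf by (auto intro: eval_PR0)
  next
    case (Suc y)
    have "eval tg (y # prec f g y e # map e [0..<n]) (prec f g (Suc y) e)"
      using tg[of "econs y (econs (prec f g y e) e)"] by (simp add: map_econs del: upt_Suc)
    then show ?case using Suc by (auto intro: eval_PRS)
  qed
  show ?thesis unfolding rc_def
    by (rule exI[of _ "PrimRec tf tg"]) (metis * map_upt_Suc0)
qed

lemma rc_add2: "rc 2 (\<lambda>e. e 0 + e 1)"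
proof -
  have "rc (Suc 1) (\<lambda>e. prec (\<lambda>e. e 0) (\<lambda>e. Suc (e 1)) (e 0) (\<lambda>i. e (Suc i)))"
    by (rule rc_prec) (auto intro!: rc_proj rc_suc)
  moreover have "prec (\<lambda>e. e 0) (\<lambda>e. Suc (e 1)) y e = y + e 0" for y e
    by (induction y) (auto simp: econs_def)
  ultimately show ?thesis by (simp add: numeral_2_eq_2)
qed

lemma rc_add: "rc n f \<Longrightarrow> rc n g \<Longrightarrow> rc n (\<lambda>e. f e + g e)"
  by (rule rc_lift2[OF rc_add2])

lemma rc_mult2: "rc 2 (\<lambda>e. e 0 * e 1)"
proof -
  have "rc (Suc 1) (\<lambda>e. prec (\<lambda>e. 0) (\<lambda>e. e 1 + e 2) (e 0) (\<lambda>i. e (Suc i)))"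
    by (rule rc_prec) (auto intro!: rc_proj rc_add rc_zero)
  moreover have "prec (\<lambda>e. 0) (\<lambda>e. e 1 + e 2) y e = y * e 0" for y e
    by (induction y) (auto simp: econs_def numeral_2_eq_2)
  ultimately show ?thesis by (simp add: numeral_2_eq_2)
qed

lemma rc_mult: "rc n f \<Longrightarrow> rc n g \<Longrightarrow> rc n (\<lambda>e. f e * g e)"
  by (rule rc_lift2[OF rc_mult2])

lemma rc_pred1: "rc 1 (\<lambda>e. e 0 - 1)"
proof -
  have "rc (Suc 0) (\<lambda>e. prec (\<lambda>e. 0) (\<lambda>e. e 0) (e 0) (\<lambda>i. e (Suc i)))"
    by (rule rc_prec) (auto intro!: rc_proj rc_zero)
  moreover have "prec (\<lambda>e. 0) (\<lambda>e. e 0) y e = y - 1" for y e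
    by (induction y) (auto simp: econs_def)
  ultimately show ?thesis by simp
qed

lemma rc_pred: "rc n f \<Longrightarrow> rc n (\<lambda>e. f e - 1)"
  by (rule rc_lift1[OF rc_pred1])

lemma rc_monus2: "rc 2 (\<lambda>e. e 1 - e 0)"
proof -
  have "rc (Suc 1) (\<lambda>e. prec (\<lambda>e. e 0) (\<lambda>e. e 1 - 1) (e 0) (\<lambda>i. e (Suc i)))"
    by (rule rc_prec[OF rc_proj rc_pred[OF rc_proj]]) auto
  moreover have "prec (\<lambda>e. e 0) (\<lambda>e. e 1 - 1) y e = e 0 - y" for y e
    by (induction y) (auto simp: econs_def)
  ultimately show ?thesis by (simp add: numeral_2_eq_2)
qed

lemma rc_sub: "rc n f \<Longrightarrow> rc n g \<Longrightarrow> rc n (\<lambda>e. f e - g e)"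
  using rc_lift2[OF rc_monus2, of n g f] by simp

lemma rc_shift2:
  assumes "rc (Suc n) (\<lambda>e. F (e 0) (\<lambda>i. e (Suc i)))"
  shows "rc (Suc (Suc n)) (\<lambda>e. F (e 0) (\<lambda>i. e (Suc (Suc i))))"
proof -
  have "rc (Suc (Suc n)) (\<lambda>e. F ((\<lambda>i. if i = 0 then e 0 else e (Suc i)) 0) (\<lambda>j. (\<lambda>i. if i = 0 then e 0 else e (Suc i)) (Suc j)))"
  proof (rule rc_comp[OF assms, of "Suc (Suc n)" "\<lambda>i e. if i = 0 then e 0 else e (Suc i)"])
    fix j assume "j < Suc n"
    then show "rc (Suc (Suc n)) (\<lambda>e. if j = 0 then e 0 else e (Suc j))"
      by (cases j) (auto intro: rc_proj)
  qed
  then show ?thesis by simp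
qed

lemma rc_bsum:
  assumes "rc (Suc n) (\<lambda>e. F (e 0) (\<lambda>i. e (Suc i)))" "rc n b"
  shows "rc n (\<lambda>e. \<Sum>i<b e. F i e)"
proof -
  define G where "G = (\<lambda>e::nat\<Rightarrow>nat. e 1 + F (e 0) (\<lambda>i. e (Suc (Suc i))))"
  have g: "rc (Suc (Suc n)) G" unfolding G_def
    by (rule rc_add) (auto intro: rc_proj rc_shift2[OF assms(1)])
  have p: "rc (Suc n) (\<lambda>e. prec (\<lambda>e. 0) G (e 0) (\<lambda>i. e (Suc i)))"
    by (rule rc_prec[OF rc_zero g])
  have v: "prec (\<lambda>e. 0) G y e = (\<Sum>i<y. F i e)" for y e
    by (induction y) (auto simp: G_def econs_def)
  have "rc n (\<lambda>e. prec (\<lambda>e. 0) G ((\<lambda>i. if i = 0 then b e else e (i - 1)) 0) (\<lambda>j. (\<lambda>i. if i = 0 then b e else e (i - 1)) (Suc j)))"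
  proof (rule rc_comp[OF p, of n "\<lambda>i e. if i = 0 then b e else e (i - 1)"])
    fix j assume "j < Suc n"
    then show "rc n (\<lambda>e. if j = 0 then b e else e (j - 1))"
      by (cases j) (auto intro: rc_proj assms(2))
  qed
  then show ?thesis by (simp add: v)
qed

lemma rc_iter:
  assumes "rc 1 (\<lambda>e. F (e 0))" "rc n g" "rc n h"
  shows "rc n (\<lambda>e. (F ^^ g e) (h e))"
proof -
  have p: "rc (Suc 1) (\<lambda>e. prec (\<lambda>e. e 0) (\<lambda>e. F (e 1)) (e 0) (\<lambda>i. e (Suc i)))"
    by (rule rc_prec) (auto intro: rc_proj rc_lift1[OF assms(1)])
  have v: "prec (\<lambda>e. e 0) (\<lambda>e. F (e 1)) y e = (F ^^ y) (e 0)" for y e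
    by (induction y) (auto simp: econs_def)
  have p2: "rc 2 (\<lambda>e. (F ^^ e 0) (e 1))" using p[simplified v] by (simp add: numeral_2_eq_2)
  show ?thesis using rc_lift2[OF p2 assms(2,3)] by simp
qed

lemma rcp_eq: "rc n f \<Longrightarrow> rc n g \<Longrightarrow> rcp n (\<lambda>e. f e = g e)"
proof -
  assume a: "rc n f" "rc n g"
  have "rc n (\<lambda>e. 1 - ((f e - g e) + (g e - f e)))"
    by (intro rc_sub rc_add a rc_const)
  then show ?thesis unfolding rcp_def by (rule rc_cong) auto
qed

lemma rcp_less: "rc n f \<Longrightarrow> rc n g \<Longrightarrow> rcp n (\<lambda>e. f e < g e)"
proof -
  assume a: "rc n f" "rc n g"
  have "rc n (\<lambda>e. 1 - (1 - (g e - f e)))"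
    by (intro rc_sub rc_add a rc_const)
  then show ?thesis unfolding rcp_def by (rule rc_cong) auto
qed

lemma rcp_le: "rc n f \<Longrightarrow> rc n g \<Longrightarrow> rcp n (\<lambda>e. f e \<le> g e)"
proof -
  assume a: "rc n f" "rc n g"
  have "rc n (\<lambda>e. 1 - (f e - g e))"
    by (intro rc_sub rc_add a rc_const)
  then show ?thesis unfolding rcp_def by (rule rc_cong) auto
qed

lemma rcp_not: "rcp n P \<Longrightarrow> rcp n (\<lambda>e. \<not> P e)"
  unfolding rcp_def by (drule rc_sub[OF rc_const, of n _ 1]) (erule rc_cong, auto)

lemma rcp_and: "rcp n P \<Longrightarrow> rcp n Q \<Longrightarrow> rcp n (\<lambda>e. P e \<and> Q e)"
  unfolding rcp_def by (drule (1) rc_mult) (erule rc_cong, auto)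

lemma rcp_or: "rcp n P \<Longrightarrow> rcp n Q \<Longrightarrow> rcp n (\<lambda>e. P e \<or> Q e)"
proof -
  assume "rcp n P" "rcp n Q"
  then have "rcp n (\<lambda>e. \<not> (\<not> P e \<and> \<not> Q e))" by (intro rcp_not rcp_and)
  then show ?thesis by simp
qed

lemma rcp_imp: "rcp n P \<Longrightarrow> rcp n Q \<Longrightarrow> rcp n (\<lambda>e. P e \<longrightarrow> Q e)"
proof -
  assume "rcp n P" "rcp n Q"
  then have "rcp n (\<lambda>e. \<not> P e \<or> Q e)" by (intro rcp_not rcp_or)
  then show ?thesis by simp
qed

lemma rcp_const: "rcp n (\<lambda>e. c)"
  unfolding rcp_def by (rule rc_const)

lemma rc_if: "rcp n P \<Longrightarrow> rc n f \<Longrightarrow> rc n g \<Longrightarrow> rc n (\<lambda>e. if P e then f e else g e)"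
proof -
  assume a: "rcp n P" "rc n f" "rc n g"
  have "rc n (\<lambda>e. (if P e then 1 else 0) * f e + (1 - (if P e then 1 else 0)) * g e)"
    using a unfolding rcp_def by (intro rc_add rc_mult rc_sub rc_const)
  then show ?thesis by (rule rc_cong) auto
qed

lemma rcp_bex:
  assumes "rcp (Suc n) (\<lambda>e. P (e 0) (\<lambda>i. e (Suc i)))" "rc n b"
  shows "rcp n (\<lambda>e. \<exists>i<b e. P i e)"
proof -
  have "rc n (\<lambda>e. \<Sum>i<b e. (if P i e then 1 else 0))"
    using assms unfolding rcp_def by (rule rc_bsum)
  then have "rcp n (\<lambda>e. 0 < (\<Sum>i<b e. (if P i e then 1 else 0::nat)))"
    by (intro rcp_less rc_const)
  moreover have "(0 < (\<Sum>i<k. (if P i e then 1 else 0::nat))) = (\<exists>i<k. P i e)" for k e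
    by (induction k) (auto simp: less_Suc_eq)
  ultimately show ?thesis by simp
qed

lemma rcp_ball:
  assumes "rcp (Suc n) (\<lambda>e. P (e 0) (\<lambda>i. e (Suc i)))" "rc n b"
  shows "rcp n (\<lambda>e. \<forall>i<b e. P i e)"
proof -
  have "rcp n (\<lambda>e. \<not> (\<exists>i<b e. \<not> P i e))"
    by (rule rcp_not[OF rcp_bex[OF rcp_not[OF assms(1)] assms(2)]])
  then show ?thesis by simp
qed

lemmas rc_intros = rc_proj rc_const rc_suc rc_add rc_mult rc_sub rc_if rcp_eq rcp_less rcp_le
  rcp_not rcp_and rcp_or rcp_imp rcp_const rcp_bex rcp_ball rc_bsum


definition tri :: "nat \<Rightarrow> nat" where "tri m = (\<Sum>i<m. Suc i)"
definition sq :: "nat \<Rightarrow> nat" where "sq n = (\<Sum>t<n. (if tri (Suc t) \<le> n then 1 else 0))"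
definition pf :: "nat \<Rightarrow> nat" where "pf n = n - tri (sq n)"
definition ps :: "nat \<Rightarrow> nat" where "ps n = sq n - pf n"
definition pr :: "nat \<Rightarrow> nat \<Rightarrow> nat" where "pr a b = tri (a + b) + a"

lemma tri_Suc[simp]: "tri (Suc m) = tri m + Suc m" by (simp add: tri_def)
lemma tri_0[simp]: "tri 0 = 0" by (simp add: tri_def)
lemma tri_mono: "m \<le> k \<Longrightarrow> tri m \<le> tri k"
  by (induction k) (auto simp: le_Suc_eq)
lemma tri_ge: "m \<le> tri m" by (induction m) auto

lemma sq_pr: "sq (pr a b) = a + b"
proof -
  let ?n = "pr a b"
  have iff: "tri (Suc t) \<le> ?n \<longleftrightarrow> t < a + b" for t
  proof
    assume "tri (Suc t) \<le> ?n"
    show "t < a + b"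
    proof (rule ccontr)
      assume "\<not> t < a + b"
      then have "tri (Suc (a+b)) \<le> tri (Suc t)" by (intro tri_mono) auto
      with \<open>tri (Suc t) \<le> ?n\<close> show False by (simp add: pr_def)
    qed
  next
    assume "t < a + b"
    then have "tri (Suc t) \<le> tri (a+b)" by (intro tri_mono) auto
    then show "tri (Suc t) \<le> ?n" by (simp add: pr_def)
  qed
  have le: "a + b \<le> ?n" using tri_ge[of "a+b"] by (simp add: pr_def)
  have "sq ?n = (\<Sum>t<?n. (if t < a + b then 1 else 0))" unfolding sq_def using iff by simp
  also have "\<dots> = card {t. t < ?n \<and> t < a + b}" by (simp add: sum.If_cases Int_def)
  also have "{t. t < ?n \<and> t < a + b} = {..<a+b}" using le by auto
  finally show ?thesis by simp
qed

lemma pf_pr[simp]: "pf (pr a b) = a" by (simp add: pf_def sq_pr) (simp add: pr_def)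
lemma ps_pr[simp]: "ps (pr a b) = b" by (simp add: ps_def sq_pr)

lemma sq_le: "sq n \<le> n"
proof -
  have "sq n \<le> (\<Sum>t<n. (1::nat))" unfolding sq_def by (rule sum_mono) auto
  then show ?thesis by simp
qed

lemma ps_le: "ps n \<le> n" using sq_le[of n] by (simp add: ps_def)

lemma rc_tri1: "rc 1 (\<lambda>e. tri (e 0))" unfolding tri_def by (intro rc_intros) auto

lemma rc_tri: "rc n g \<Longrightarrow> rc n (\<lambda>e. tri (g e))"
by (rule rc_lift1[OF rc_tri1])

lemma rc_sq1: "rc 1 (\<lambda>e. sq (e 0))" unfolding sq_def by (intro rc_intros rc_tri) auto

lemma rc_sq: "rc n g \<Longrightarrow> rc n (\<lambda>e. sq (g e))"
by (rule rc_lift1[OF rc_sq1])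

lemma rc_pf1: "rc 1 (\<lambda>e. pf (e 0))" unfolding pf_def by (intro rc_intros rc_tri rc_sq) auto

lemma rc_pf: "rc n g \<Longrightarrow> rc n (\<lambda>e. pf (g e))"
by (rule rc_lift1[OF rc_pf1])

lemma rc_ps1: "rc 1 (\<lambda>e. ps (e 0))" unfolding ps_def by (intro rc_intros rc_pf rc_sq) auto

lemma rc_ps: "rc n g \<Longrightarrow> rc n (\<lambda>e. ps (g e))"
by (rule rc_lift1[OF rc_ps1])

lemma rc_pr: "rc n g \<Longrightarrow> rc n h \<Longrightarrow> rc n (\<lambda>e. pr (g e) (h e))"
  unfolding pr_def by (intro rc_intros rc_tri)

definition hdc :: "nat \<Rightarrow> nat" where "hdc l = pf (l - 1)"
definition tlc :: "nat \<Rightarrow> nat" where "tlc l = ps (l - 1)"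
definition consc :: "nat \<Rightarrow> nat \<Rightarrow> nat" where "consc x l = Suc (pr x l)"

lemma hdc_cons[simp]: "hdc (consc x l) = x" by (simp add: hdc_def consc_def)
lemma tlc_cons[simp]: "tlc (consc x l) = l" by (simp add: tlc_def consc_def)
lemma consc_ne[simp]: "consc x l \<noteq> 0" by (simp add: consc_def)
lemma tlc_less: "l \<noteq> 0 \<Longrightarrow> tlc l < l" using ps_le[of "l - 1"] by (simp add: tlc_def)

function declist :: "nat \<Rightarrow> nat list" where
  "declist l = (if l = 0 then [] else hdc l # declist (tlc l))"
  by pat_completeness auto
termination by (relation "measure id") (auto simp: tlc_less)

declare declist.simps[simp del]

lemma declist_0[simp]: "declist 0 = []" by (simp add: declist.simps)
lemma declist_cons[simp]: "declist (consc x l) = x # declist l" by (subst declist.simps) simp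

fun lcode :: "nat list \<Rightarrow> nat" where
  "lcode [] = 0"
| "lcode (x # xs) = consc x (lcode xs)"

lemma declist_lcode[simp]: "declist (lcode xs) = xs" by (induction xs) auto

definition itl :: "nat \<Rightarrow> nat \<Rightarrow> nat" where "itl j l = (tlc ^^ j) l"
definition lenc :: "nat \<Rightarrow> nat" where "lenc l = (\<Sum>j<l. (if itl j l = 0 then 0 else 1))"
definition nthc :: "nat \<Rightarrow> nat \<Rightarrow> nat" where "nthc l j = hdc (itl j l)"

lemma declist_itl: "declist (itl j l) = drop j (declist l)"
proof (induction j arbitrary: l)
  case 0 then show ?case by (simp add: itl_def)
next
  case (Suc j)
  have "itl (Suc j) l = itl j (tlc l)" by (simp add: itl_def funpow_swap1)
  moreover have "declist (tlc l) = drop 1 (declist l)"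
  proof (cases "l = 0")
    case True
    then have "tlc l = 0" using ps_le[of 0] by (simp add: tlc_def)
    then show ?thesis using True by simp
  next
    case False
    then show ?thesis by (subst (2) declist.simps) simp
  qed
  ultimately show ?case using Suc by simp
qed

lemma declist_eq0: "declist l = [] \<longleftrightarrow> l = 0" by (subst declist.simps) simp

lemma length_declist_le: "length (declist l) \<le> l"
proof (induction l rule: less_induct)
  case (less l)
  show ?case
  proof (cases "l = 0")
    case False
    then have "length (declist (tlc l)) \<le> tlc l" using less tlc_less by blast
    then show ?thesis using False tlc_less[OF False] by (subst declist.simps) simp
  qed simp
qed

lemma count_lt: "m \<le> l \<Longrightarrow> (\<Sum>j<l. if j < m then 1 else (0::nat)) = m"
  by (induction l) (auto simp: le_Suc_eq)

lemma lenc_correct: "lenc l = length (declist l)"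
proof -
  have iff: "(if itl j l = 0 then 0 else 1) = (if j < length (declist l) then 1 else (0::nat))" for j
    using declist_itl[of j l] declist_eq0[of "itl j l"] by auto
  have "lenc l = (\<Sum>j<l. (if j < length (declist l) then 1 else 0))"
    unfolding lenc_def iff ..
  also have "\<dots> = length (declist l)" by (rule count_lt[OF length_declist_le])
  finally show ?thesis .
qed

lemma nthc_correct: "j < length (declist l) \<Longrightarrow> nthc l j = declist l ! j"
proof -
  assume j: "j < length (declist l)"
  then have "itl j l \<noteq> 0" using declist_itl[of j l] declist_eq0[of "itl j l"] by auto
  then have "declist (itl j l) = hdc (itl j l) # declist (tlc (itl j l))" by (subst declist.simps) simp
  then have "hdc (itl j l) = hd (drop j (declist l))" using declist_itl[of j l] by simp
  then show ?thesis using hd_drop_conv_nth[OF j] unfolding nthc_def by simp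
qed

lemma rc_hdc: "rc n g \<Longrightarrow> rc n (\<lambda>e. hdc (g e))" unfolding hdc_def by (intro rc_intros rc_pf)
lemma rc_tlc: "rc n g \<Longrightarrow> rc n (\<lambda>e. tlc (g e))" unfolding tlc_def by (intro rc_intros rc_ps)
lemma rc_consc: "rc n g \<Longrightarrow> rc n h \<Longrightarrow> rc n (\<lambda>e. consc (g e) (h e))" unfolding consc_def by (intro rc_intros rc_pr)
lemma rc_itl: "rc n g \<Longrightarrow> rc n h \<Longrightarrow> rc n (\<lambda>e. itl (g e) (h e))"
  unfolding itl_def by (rule rc_iter) (auto intro: rc_tlc rc_proj)
lemma rc_lenc1: "rc 1 (\<lambda>e. lenc (e 0))" unfolding lenc_def by (intro rc_intros rc_itl) auto

lemma rc_lenc: "rc n g \<Longrightarrow> rc n (\<lambda>e. lenc (g e))"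
by (rule rc_lift1[OF rc_lenc1])
lemma rc_nthc: "rc n g \<Longrightarrow> rc n h \<Longrightarrow> rc n (\<lambda>e. nthc (g e) (h e))"
  unfolding nthc_def by (rule rc_hdc[OF rc_itl])

lemmas rc_intros2 = rc_intros rc_pf rc_ps rc_pr rc_hdc rc_tlc rc_consc rc_itl rc_lenc rc_nthc


fun code :: "recf \<Rightarrow> nat" where
  "code Zero = pr 0 0"
| "code Succ = pr 1 0"
| "code (Proj i) = pr 2 i"
| "code (Comp f gs) = pr 3 (pr (code f) (lcode (map code gs)))"
| "code (PrimRec f g) = pr 4 (pr (code f) (code g))"
| "code (Mu f) = pr 5 (code f)"

definition trip :: "nat \<Rightarrow> nat \<Rightarrow> nat \<Rightarrow> nat" where "trip a b c = pr a (pr b c)"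

lemma trip_sel[simp]: "pf (trip a b c) = a" "pf (ps (trip a b c)) = b" "ps (ps (trip a b c)) = c"
  by (simp_all add: trip_def)

definition jst :: "((nat \<Rightarrow> bool) \<Rightarrow> bool) \<Rightarrow> nat \<Rightarrow> bool" where
"jst QQ en \<longleftrightarrow>
  (pf (pf en) = 0 \<and> ps (ps en) = 0) \<or>
  (pf (pf en) = 1 \<and> pf (ps en) \<noteq> 0 \<and> ps (ps en) = Suc (hdc (pf (ps en)))) \<or>
  (pf (pf en) = 2 \<and> ps (pf en) < lenc (pf (ps en)) \<and> ps (ps en) = nthc (pf (ps en)) (ps (pf en))) \<or>
  (pf (pf en) = 3 \<and> QQ (\<lambda>en'. pf en' = pf (ps (pf en)) \<and> ps (ps en') = ps (ps en) \<and>
       lenc (pf (ps en')) = lenc (ps (ps (pf en))) \<and>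
       (\<forall>l<lenc (ps (ps (pf en))). QQ (\<lambda>en''. en'' = trip (nthc (ps (ps (pf en))) l) (pf (ps en)) (nthc (pf (ps en')) l))))) \<or>
  (pf (pf en) = 4 \<and> pf (ps en) \<noteq> 0 \<and> hdc (pf (ps en)) = 0 \<and>
       QQ (\<lambda>en'. en' = trip (pf (ps (pf en))) (tlc (pf (ps en))) (ps (ps en)))) \<or>
  (pf (pf en) = 4 \<and> pf (ps en) \<noteq> 0 \<and> hdc (pf (ps en)) \<noteq> 0 \<and>
       QQ (\<lambda>en'. pf en' = pf en \<and> pf (ps en') = consc (hdc (pf (ps en)) - 1) (tlc (pf (ps en))) \<and>
          QQ (\<lambda>en''. en'' = trip (ps (ps (pf en))) (consc (hdc (pf (ps en)) - 1) (consc (ps (ps en')) (tlc (pf (ps en))))) (ps (ps en))))) \<or>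
  (pf (pf en) = 5 \<and> QQ (\<lambda>en'. en' = trip (ps (pf en)) (consc (ps (ps en)) (pf (ps en))) 0) \<and>
       (\<forall>z<ps (ps en). QQ (\<lambda>en'. pf en' = ps (pf en) \<and> pf (ps en') = consc z (pf (ps en)) \<and> 0 < ps (ps en'))))"

definition exS :: "nat set \<Rightarrow> (nat \<Rightarrow> bool) \<Rightarrow> bool" where "exS S P \<longleftrightarrow> (\<exists>x\<in>S. P x)"

definition validL :: "nat list \<Rightarrow> bool" where
  "validL Ls \<longleftrightarrow> (\<forall>i<length Ls. jst (exS (set (take i Ls))) (Ls ! i))"

definition valid_c :: "nat \<Rightarrow> bool" where
  "valid_c L \<longleftrightarrow> (\<forall>i<lenc L. jst (\<lambda>P. \<exists>j<i. P (nthc L j)) (nthc L i))"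

lemma set_take_nth: "i \<le> length xs \<Longrightarrow> set (take i xs) = (\<lambda>j. xs ! j) ` {..<i}"
proof (intro equalityI subsetI)
  fix x assume i: "i \<le> length xs" and "x \<in> set (take i xs)"
  then obtain j where j: "j < length (take i xs)" "take i xs ! j = x" by (auto simp: in_set_conv_nth)
  then have "j < i" "xs ! j = x" by auto
  then show "x \<in> (\<lambda>j. xs ! j) ` {..<i}" by auto
next
  fix x assume i: "i \<le> length xs" and "x \<in> (\<lambda>j. xs ! j) ` {..<i}"
  then obtain j where j: "j < i" "x = xs ! j" by auto
  then have "take i xs ! j = x" "j < length (take i xs)" using i by auto
  then show "x \<in> set (take i xs)" by (metis nth_mem)
qed

lemma valid_c_iff: "valid_c L \<longleftrightarrow> validL (declist L)"
proof -
  have ex: "(\<lambda>P. \<exists>j<i. P (nthc L j)) = exS (set (take i (declist L)))" if "i < length (declist L)" for i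
  proof (rule ext)
    fix P
    have "(\<exists>j<i. P (nthc L j)) = (\<exists>j<i. P (declist L ! j))" using that by (auto simp: nthc_correct)
    also have "\<dots> = exS (set (take i (declist L))) P" unfolding exS_def using that
      by (subst set_take_nth) auto
    finally show "(\<exists>j<i. P (nthc L j)) = exS (set (take i (declist L))) P" .
  qed
  show ?thesis unfolding valid_c_def validL_def lenc_correct
  proof (intro iffI allI impI)
    fix i assume "\<forall>i<length (declist L). jst (\<lambda>P. \<exists>j<i. P (nthc L j)) (nthc L i)" "i < length (declist L)"
    then show "jst (exS (set (take i (declist L)))) (declist L ! i)" using ex nthc_correct by metis
  next
    fix i assume "\<forall>i<length (declist L). jst (exS (set (take i (declist L)))) (declist L ! i)" "i < length (declist L)"
    then show "jst (\<lambda>P. \<exists>j<i. P (nthc L j)) (nthc L i)" using ex nthc_correct by metis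
  qed
qed

lemma exS_mono: "exS S P \<Longrightarrow> S \<subseteq> S' \<Longrightarrow> (\<And>x. P x \<Longrightarrow> P' x) \<Longrightarrow> exS S' P'"
  unfolding exS_def by blast

lemma jst_mono: "jst (exS S) en \<Longrightarrow> S \<subseteq> S' \<Longrightarrow> jst (exS S') en"
  unfolding jst_def
  apply (elim disjE conjE)
  apply simp
  apply simp
  apply simp
  subgoal by (intro disjI2 disjI1 conjI, assumption, erule exS_mono, assumption, blast intro: exS_mono)
  subgoal by (intro disjI2 disjI1 conjI, assumption+, erule exS_mono, assumption, blast intro: exS_mono)
  subgoal by (intro disjI2 disjI1 conjI, assumption+, erule exS_mono, assumption, blast intro: exS_mono)
  subgoal by (intro disjI2 conjI, assumption+, erule exS_mono, assumption, blast intro: exS_mono, blast intro: exS_mono)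
  done
lemma jst_sound:
  assumes j: "jst (exS S) en"
    and IH: "\<And>x t. x \<in> S \<Longrightarrow> pf x = code t \<Longrightarrow> eval t (declist (pf (ps x))) (ps (ps x))"
    and c: "pf en = code t"
  shows "eval t (declist (pf (ps en))) (ps (ps en))"
proof -
  define xs where "xs = pf (ps en)"
  define v where "v = ps (ps en)"
  define arg where "arg = ps (pf en)"
  have dxs: "xs \<noteq> 0 \<Longrightarrow> declist xs = hdc xs # declist (tlc xs)" by (subst declist.simps) simp
  have j': "jst (exS S) en" by fact
  note jj = j'[unfolded jst_def, folded xs_def v_def arg_def]
  have "eval t (declist xs) v"
  proof (cases t)
    case Zero
    with jj c show ?thesis by (auto intro: eval_Zero)
  next
    case Succ
    with jj c have "xs \<noteq> 0" "v = Suc (hdc xs)" by auto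
    then show ?thesis using Succ dxs by (auto intro: eval_Succ)
  next
    case (Proj i)
    with c have "arg = i" "pf (pf en) = 2" by (simp_all add: arg_def)
    with jj have "i < lenc xs" "v = nthc xs i" by auto
    then show ?thesis using Proj by (auto simp: lenc_correct nthc_correct intro: eval_Proj)
  next
    case (Comp f gs)
    with c have "arg = pr (code f) (lcode (map code gs))" "pf (pf en) = 3" by (simp_all add: arg_def)
    with jj have "exS S (\<lambda>en'. pf en' = code f \<and> ps (ps en') = v \<and>
       lenc (pf (ps en')) = length gs \<and>
       (\<forall>l<length gs. exS S (\<lambda>en''. en'' = trip (code (gs ! l)) xs (nthc (pf (ps en')) l))))"
      by (simp add: lenc_correct nthc_correct)
    then obtain en' where en': "en' \<in> S" "pf en' = code f" "ps (ps en') = v"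
        "lenc (pf (ps en')) = length gs"
        "\<forall>l<length gs. \<exists>x\<in>S. x = trip (code (gs ! l)) xs (nthc (pf (ps en')) l)"
      unfolding exS_def by blast
    define ys where "ys = declist (pf (ps en'))"
    have ev_f: "eval f ys v" using IH[OF en'(1,2)] en'(3) ys_def by simp
    have "list_all2 (\<lambda>g v. eval g (declist xs) v) gs ys"
    proof (unfold list_all2_conv_all_nth, intro conjI allI impI)
      show "length gs = length ys" using en'(4) ys_def by (simp add: lenc_correct)
      fix l assume l: "l < length gs"
      then obtain x where "x \<in> S" "x = trip (code (gs ! l)) xs (nthc (pf (ps en')) l)" using en'(5) by blast
      then have "eval (gs ! l) (declist xs) (nthc (pf (ps en')) l)" using IH[of x "gs ! l"] by simp
      moreover have "nthc (pf (ps en')) l = ys ! l" using l en'(4) ys_def by (simp add: nthc_correct lenc_correct)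
      ultimately show "eval (gs ! l) (declist xs) (ys ! l)" by simp
    qed
    then show ?thesis using Comp ev_f by (auto intro: eval_Comp)
  next
    case (PrimRec f g)
    with c have "arg = pr (code f) (code g)" "pf (pf en) = 4" by (simp_all add: arg_def)
    with jj have cases:
      "(xs \<noteq> 0 \<and> hdc xs = 0 \<and> exS S (\<lambda>x. x = trip (code f) (tlc xs) v)) \<or>
       (xs \<noteq> 0 \<and> hdc xs \<noteq> 0 \<and> exS S (\<lambda>x. pf x = pf en \<and> pf (ps x) = consc (hdc xs - 1) (tlc xs) \<and>
          exS S (\<lambda>y. y = trip (code g) (consc (hdc xs - 1) (consc (ps (ps x)) (tlc xs))) v)))"
      by simp
    then show ?thesis
    proof
      assume a: "xs \<noteq> 0 \<and> hdc xs = 0 \<and> exS S (\<lambda>x. x = trip (code f) (tlc xs) v)"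
      then have "trip (code f) (tlc xs) v \<in> S" unfolding exS_def by auto
      then have "eval f (declist (tlc xs)) v" using IH[of "trip (code f) (tlc xs) v" f] by simp
      then show ?thesis using a dxs PrimRec by (auto intro: eval_PR0)
    next
      assume a: "xs \<noteq> 0 \<and> hdc xs \<noteq> 0 \<and> exS S (\<lambda>x. pf x = pf en \<and> pf (ps x) = consc (hdc xs - 1) (tlc xs) \<and>
          exS S (\<lambda>y. y = trip (code g) (consc (hdc xs - 1) (consc (ps (ps x)) (tlc xs))) v))"
      then obtain x where x0: "x \<in> S" and x1: "pf x = pf en \<and> pf (ps x) = consc (hdc xs - 1) (tlc xs) \<and>
          exS S (\<lambda>y. y = trip (code g) (consc (hdc xs - 1) (consc (ps (ps x)) (tlc xs))) v)"
        unfolding exS_def by blast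
      have x: "x \<in> S" "pf x = code t" "pf (ps x) = consc (hdc xs - 1) (tlc xs)"
        "trip (code g) (consc (hdc xs - 1) (consc (ps (ps x)) (tlc xs))) v \<in> S"
        using x0 x1 c unfolding exS_def by auto
      have e1: "eval t ((hdc xs - 1) # declist (tlc xs)) (ps (ps x))" using IH[OF x(1,2)] x(3) by simp
      have e2: "eval g ((hdc xs - 1) # ps (ps x) # declist (tlc xs)) v" using IH[OF x(4), of g] by simp
      have "eval t (Suc (hdc xs - 1) # declist (tlc xs)) v" using e1 e2 PrimRec by (auto intro: eval_PRS)
      then show ?thesis using a dxs by simp
    qed
  next
    case (Mu f)
    with c have "arg = code f" "pf (pf en) = 5" by (simp_all add: arg_def)
    with jj have "exS S (\<lambda>en'. en' = trip (code f) (consc v xs) 0) \<and>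
       (\<forall>z<v. exS S (\<lambda>en'. pf en' = code f \<and> pf (ps en') = consc z xs \<and> 0 < ps (ps en')))" by simp
    then have a: "trip (code f) (consc v xs) 0 \<in> S"
      "\<forall>z<v. \<exists>x\<in>S. pf x = code f \<and> pf (ps x) = consc z xs \<and> 0 < ps (ps x)"
      unfolding exS_def by auto
    have "eval f (v # declist xs) 0" using IH[OF a(1), of f] by simp
    moreover have "\<exists>w>0. eval f (z # declist xs) w" if "z < v" for z
    proof -
      obtain x where "x \<in> S" "pf x = code f" "pf (ps x) = consc z xs" "0 < ps (ps x)" using a(2) \<open>z < v\<close> by blast
      then show ?thesis using IH[of x f] by auto
    qed
    ultimately show ?thesis using Mu by (auto intro: eval_Mu)
  qed
  then show ?thesis by (simp add: xs_def v_def)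
qed

lemma validL_sound:
  assumes "validL Ls"
  shows "i < length Ls \<Longrightarrow> pf (Ls ! i) = code t \<Longrightarrow> eval t (declist (pf (ps (Ls ! i)))) (ps (ps (Ls ! i)))"
proof (induction i arbitrary: t rule: less_induct)
  case (less i)
  have j: "jst (exS (set (take i Ls))) (Ls ! i)" using assms less.prems unfolding validL_def by auto
  show ?case
  proof (rule jst_sound[OF j _ less.prems(2)])
    fix x t' assume "x \<in> set (take i Ls)" "pf x = code t'"
    then obtain k where k: "k < i" "x = Ls ! k" using less.prems(1) by (auto simp: in_set_conv_nth)
    have "k < length Ls" using k less.prems(1) by simp
    from less.IH[OF k(1) this] k(2) \<open>pf x = code t'\<close>
    show "eval t' (declist (pf (ps x))) (ps (ps x))" by simp
  qed
qed


lemma lenc_lcode[simp]: "lenc (lcode xs) = length xs" by (simp add: lenc_correct)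
lemma nthc_lcode[simp]: "l < length xs \<Longrightarrow> nthc (lcode xs) l = xs ! l" by (simp add: nthc_correct)
lemma hdc_lcode[simp]: "hdc (lcode (x # xs)) = x" by simp
lemma tlc_lcode[simp]: "tlc (lcode (x # xs)) = lcode xs" by simp

lemma validL_Nil[simp]: "validL []" by (simp add: validL_def)

lemma validL_append: "validL Ls \<Longrightarrow> validL Ms \<Longrightarrow> validL (Ls @ Ms)"
  unfolding validL_def
proof (intro allI impI)
  fix i assume a: "\<forall>i<length Ls. jst (exS (set (take i Ls))) (Ls ! i)"
    "\<forall>i<length Ms. jst (exS (set (take i Ms))) (Ms ! i)" and i: "i < length (Ls @ Ms)"
  show "jst (exS (set (take i (Ls @ Ms)))) ((Ls @ Ms) ! i)"
  proof (cases "i < length Ls")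
    case True then show ?thesis using a(1) by (simp add: nth_append)
  next
    case False
    define k where "k = i - length Ls"
    have k: "k < length Ms" "i = length Ls + k" using False i k_def by auto
    have "jst (exS (set (take k Ms))) (Ms ! k)" using a(2) k(1) by simp
    moreover have "set (take k Ms) \<subseteq> set (take i (Ls @ Ms))" using k(2) by auto
    ultimately show ?thesis using k(2) by (simp add: nth_append jst_mono)
  qed
qed

lemma validL_snoc: "validL Ls \<Longrightarrow> jst (exS (set Ls)) en \<Longrightarrow> validL (Ls @ [en])"
  unfolding validL_def by (auto simp: nth_append less_Suc_eq)

lemma validL_ext: "validL Ls \<Longrightarrow> jst (exS (set Ls)) en \<Longrightarrow> \<exists>Ms. validL Ms \<and> en \<in> set Ms"
  using validL_snoc by fastforce

lemma validL_mem_jst: "validL Ls \<Longrightarrow> en \<in> set Ls \<Longrightarrow> jst (exS (set Ls)) en"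
proof -
  assume v: "validL Ls" and "en \<in> set Ls"
  then obtain i where i: "i < length Ls" "en = Ls ! i" by (auto simp: in_set_conv_nth)
  then have "jst (exS (set (take i Ls))) en" using v unfolding validL_def by auto
  then show ?thesis by (rule jst_mono) (rule set_take_subset)
qed

lemma exS_I: "x \<in> S \<Longrightarrow> P x \<Longrightarrow> exS S P" unfolding exS_def by blast

lemma jstI_Zero: "pf (pf en) = 0 \<Longrightarrow> ps (ps en) = 0 \<Longrightarrow> jst Q en" unfolding jst_def by blast
lemma jstI_Succ: "pf (pf en) = 1 \<Longrightarrow> pf (ps en) \<noteq> 0 \<Longrightarrow> ps (ps en) = Suc (hdc (pf (ps en))) \<Longrightarrow> jst Q en"
  unfolding jst_def by blast
lemma jstI_Proj: "pf (pf en) = 2 \<Longrightarrow> ps (pf en) < lenc (pf (ps en)) \<Longrightarrow> ps (ps en) = nthc (pf (ps en)) (ps (pf en)) \<Longrightarrow> jst Q en"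
  unfolding jst_def by blast
lemma jstI_Comp: "pf (pf en) = 3 \<Longrightarrow> Q (\<lambda>en'. pf en' = pf (ps (pf en)) \<and> ps (ps en') = ps (ps en) \<and>
       lenc (pf (ps en')) = lenc (ps (ps (pf en))) \<and>
       (\<forall>l<lenc (ps (ps (pf en))). Q (\<lambda>en''. en'' = trip (nthc (ps (ps (pf en))) l) (pf (ps en)) (nthc (pf (ps en')) l)))) \<Longrightarrow> jst Q en"
  unfolding jst_def by blast
lemma jstI_PR0: "pf (pf en) = 4 \<Longrightarrow> pf (ps en) \<noteq> 0 \<Longrightarrow> hdc (pf (ps en)) = 0 \<Longrightarrow>
       Q (\<lambda>en'. en' = trip (pf (ps (pf en))) (tlc (pf (ps en))) (ps (ps en))) \<Longrightarrow> jst Q en"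
  unfolding jst_def by blast
lemma jstI_PRS: "pf (pf en) = 4 \<Longrightarrow> pf (ps en) \<noteq> 0 \<Longrightarrow> hdc (pf (ps en)) \<noteq> 0 \<Longrightarrow>
       Q (\<lambda>en'. pf en' = pf en \<and> pf (ps en') = consc (hdc (pf (ps en)) - 1) (tlc (pf (ps en))) \<and>
          Q (\<lambda>en''. en'' = trip (ps (ps (pf en))) (consc (hdc (pf (ps en)) - 1) (consc (ps (ps en')) (tlc (pf (ps en))))) (ps (ps en)))) \<Longrightarrow> jst Q en"
  unfolding jst_def by blast
lemma jstI_Mu: "pf (pf en) = 5 \<Longrightarrow> Q (\<lambda>en'. en' = trip (ps (pf en)) (consc (ps (ps en)) (pf (ps en))) 0) \<Longrightarrow>
       (\<forall>z<ps (ps en). Q (\<lambda>en'. pf en' = ps (pf en) \<and> pf (ps en') = consc z (pf (ps en)) \<and> 0 < ps (ps en'))) \<Longrightarrow> jst Q en"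
  unfolding jst_def by blast

lemma all_proofs:
  "list_all2 (\<lambda>g v. \<exists>Ls. validL Ls \<and> trip (code g) X v \<in> set Ls) gs ys \<Longrightarrow>
   \<exists>Ls. validL Ls \<and> (\<forall>l<length gs. trip (code (gs ! l)) X (ys ! l) \<in> set Ls)"
proof (induction rule: list_all2_induct)
  case Nil then show ?case by (auto intro: exI[of _ "[]"])
next
  case (Cons g gs v ys)
  obtain L1 where L1: "validL L1" "trip (code g) X v \<in> set L1" using Cons by blast
  obtain L2 where L2: "validL L2" "\<forall>l<length gs. trip (code (gs ! l)) X (ys ! l) \<in> set L2" using Cons by blast
  have "\<forall>l<length (g # gs). trip (code ((g # gs) ! l)) X ((v # ys) ! l) \<in> set (L1 @ L2)"
    using L1 L2 by (auto simp: less_Suc_eq_0_disj)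
  then show ?case using validL_append[OF L1(1) L2(1)] by blast
qed

lemma mu_proofs:
  "(\<forall>z<y. \<exists>w>0. \<exists>Ls. validL Ls \<and> trip c (consc z X) w \<in> set Ls) \<Longrightarrow>
   \<exists>Ls. validL Ls \<and> (\<forall>z<y. \<exists>w>0. trip c (consc z X) w \<in> set Ls)"
proof (induction y)
  case 0 then show ?case by (auto intro: exI[of _ "[]"])
next
  case (Suc y)
  obtain L1 where L1: "validL L1" "\<forall>z<y. \<exists>w>0. trip c (consc z X) w \<in> set L1" using Suc by auto
  obtain w L2 where L2: "w > 0" "validL L2" "trip c (consc y X) w \<in> set L2" using Suc.prems by blast
  have "\<forall>z<Suc y. \<exists>w>0. trip c (consc z X) w \<in> set (L1 @ L2)"
    using L1 L2 by (auto simp: less_Suc_eq)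
  then show ?case using validL_append[OF L1(1) L2(2)] by blast
qed

lemma completeness: "eval t xs v \<Longrightarrow> \<exists>Ls. validL Ls \<and> trip (code t) (lcode xs) v \<in> set Ls"
proof (induction rule: eval.induct)
  case (eval_Zero xs)
  show ?case by (rule validL_ext[OF validL_Nil]) (rule jstI_Zero; simp)
next
  case (eval_Succ x xs)
  show ?case by (rule validL_ext[OF validL_Nil]) (rule jstI_Succ; simp)
next
  case (eval_Proj i xs)
  show ?case by (rule validL_ext[OF validL_Nil]) (rule jstI_Proj; use eval_Proj in simp)
next
  case (eval_Comp xs gs ys f v)
  have "list_all2 (\<lambda>g v. \<exists>Ls. validL Ls \<and> trip (code g) (lcode xs) v \<in> set Ls) gs ys"
    using eval_Comp.IH(1) by (rule list_all2_mono) blast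
  from all_proofs[OF this] obtain L1 where L1: "validL L1"
    "\<forall>l<length gs. trip (code (gs ! l)) (lcode xs) (ys ! l) \<in> set L1" by blast
  obtain L2 where L2: "validL L2" "trip (code f) (lcode ys) v \<in> set L2" using eval_Comp.IH(2) by blast
  have len: "length ys = length gs" using eval_Comp.IH(1) by (simp add: list_all2_lengthD)
  show ?case
  proof (rule validL_ext[OF validL_append[OF L1(1) L2(1)]], rule jstI_Comp)
    show "pf (pf (trip (code (Comp f gs)) (lcode xs) v)) = 3" by simp
    show "exS (set (L1 @ L2)) (\<lambda>en'. pf en' = pf (ps (pf (trip (code (Comp f gs)) (lcode xs) v))) \<and>
         ps (ps en') = ps (ps (trip (code (Comp f gs)) (lcode xs) v)) \<and>
         lenc (pf (ps en')) = lenc (ps (ps (pf (trip (code (Comp f gs)) (lcode xs) v)))) \<and>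
         (\<forall>l<lenc (ps (ps (pf (trip (code (Comp f gs)) (lcode xs) v)))).
             exS (set (L1 @ L2)) (\<lambda>en''. en'' = trip (nthc (ps (ps (pf (trip (code (Comp f gs)) (lcode xs) v)))) l)
                  (pf (ps (trip (code (Comp f gs)) (lcode xs) v))) (nthc (pf (ps en')) l))))"
    proof (rule exS_I[of "trip (code f) (lcode ys) v"])
      show "trip (code f) (lcode ys) v \<in> set (L1 @ L2)" using L2 by simp
      show "pf (trip (code f) (lcode ys) v) = pf (ps (pf (trip (code (Comp f gs)) (lcode xs) v))) \<and>
         ps (ps (trip (code f) (lcode ys) v)) = ps (ps (trip (code (Comp f gs)) (lcode xs) v)) \<and>
         lenc (pf (ps (trip (code f) (lcode ys) v))) = lenc (ps (ps (pf (trip (code (Comp f gs)) (lcode xs) v)))) \<and>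
         (\<forall>l<lenc (ps (ps (pf (trip (code (Comp f gs)) (lcode xs) v)))).
             exS (set (L1 @ L2)) (\<lambda>en''. en'' = trip (nthc (ps (ps (pf (trip (code (Comp f gs)) (lcode xs) v)))) l)
                  (pf (ps (trip (code (Comp f gs)) (lcode xs) v))) (nthc (pf (ps (trip (code f) (lcode ys) v))) l)))"
        using len L1(2) by (auto simp: exS_def)
    qed
  qed
next
  case (eval_PR0 f xs v g)
  obtain L where L: "validL L" "trip (code f) (lcode xs) v \<in> set L" using eval_PR0.IH by blast
  show ?case
    by (rule validL_ext[OF L(1)], rule jstI_PR0) (use L(2) in \<open>auto simp: exS_def\<close>)
next
  case (eval_PRS f g y xs r v)
  obtain L1 where L1: "validL L1" "trip (code (PrimRec f g)) (lcode (y # xs)) r \<in> set L1" using eval_PRS.IH(1) by blast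
  obtain L2 where L2: "validL L2" "trip (code g) (lcode (y # r # xs)) v \<in> set L2" using eval_PRS.IH(2) by blast
  show ?case
  proof (rule validL_ext[OF validL_append[OF L1(1) L2(1)]], rule jstI_PRS)
    show "exS (set (L1 @ L2)) (\<lambda>en'. pf en' = pf (trip (code (PrimRec f g)) (lcode (Suc y # xs)) v) \<and>
       pf (ps en') = consc (hdc (pf (ps (trip (code (PrimRec f g)) (lcode (Suc y # xs)) v))) - 1)
          (tlc (pf (ps (trip (code (PrimRec f g)) (lcode (Suc y # xs)) v)))) \<and>
       exS (set (L1 @ L2)) (\<lambda>en''. en'' = trip (ps (ps (pf (trip (code (PrimRec f g)) (lcode (Suc y # xs)) v))))
          (consc (hdc (pf (ps (trip (code (PrimRec f g)) (lcode (Suc y # xs)) v))) - 1)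
            (consc (ps (ps en')) (tlc (pf (ps (trip (code (PrimRec f g)) (lcode (Suc y # xs)) v))))))
          (ps (ps (trip (code (PrimRec f g)) (lcode (Suc y # xs)) v)))))"
      by (rule exS_I[of "trip (code (PrimRec f g)) (lcode (y # xs)) r"]) (use L1(2) L2(2) in \<open>auto simp: exS_def\<close>)
  qed simp_all
next
  case (eval_Mu f y xs)
  obtain L1 where L1: "validL L1" "trip (code f) (lcode (y # xs)) 0 \<in> set L1" using eval_Mu.IH(1) by blast
  have "\<forall>z<y. \<exists>w>0. \<exists>Ls. validL Ls \<and> trip (code f) (consc z (lcode xs)) w \<in> set Ls"
    using eval_Mu.IH(2) by fastforce
  from mu_proofs[OF this] obtain L2 where L2: "validL L2" "\<forall>z<y. \<exists>w>0. trip (code f) (consc z (lcode xs)) w \<in> set L2" by blast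
  show ?case
  proof (rule validL_ext[OF validL_append[OF L1(1) L2(1)]], rule jstI_Mu)
    show "exS (set (L1 @ L2)) (\<lambda>en'. en' = trip (ps (pf (trip (code (Mu f)) (lcode xs) y)))
       (consc (ps (ps (trip (code (Mu f)) (lcode xs) y))) (pf (ps (trip (code (Mu f)) (lcode xs) y)))) 0)"
      using L1(2) by (auto simp: exS_def)
    show "\<forall>z<ps (ps (trip (code (Mu f)) (lcode xs) y)). exS (set (L1 @ L2)) (\<lambda>en'. pf en' = ps (pf (trip (code (Mu f)) (lcode xs) y)) \<and>
        pf (ps en') = consc z (pf (ps (trip (code (Mu f)) (lcode xs) y))) \<and> 0 < ps (ps en'))"
    proof (intro allI impI)
      fix z assume "z < ps (ps (trip (code (Mu f)) (lcode xs) y))"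
      then obtain w where "w > 0" "trip (code f) (consc z (lcode xs)) w \<in> set L2" using L2(2) by auto
      then show "exS (set (L1 @ L2)) (\<lambda>en'. pf en' = ps (pf (trip (code (Mu f)) (lcode xs) y)) \<and>
        pf (ps en') = consc z (pf (ps (trip (code (Mu f)) (lcode xs) y))) \<and> 0 < ps (ps en'))"
        by (intro exS_I[of "trip (code f) (consc z (lcode xs)) w"]) auto
    qed
  qed simp
qed

inductive_cases CompE: "eval (Comp f gs) xs v"
inductive_cases PRSE: "eval (PrimRec f g) (Suc y # xs) v"
inductive_cases MuE: "eval (Mu f) xs v"

lemma eval_det: "eval t xs v \<Longrightarrow> eval t xs v' \<Longrightarrow> v = v'"
proof (induction arbitrary: v' rule: eval.induct)
  case (eval_Zero xs) show ?case using eval_Zero.prems by (cases rule: eval.cases) auto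
next
  case (eval_Succ x xs) show ?case using eval_Succ.prems by (cases rule: eval.cases) auto
next
  case (eval_Proj i xs) show ?case using eval_Proj.prems by (cases rule: eval.cases) auto
next
  case (eval_Comp xs gs ys f v)
  from eval_Comp.prems obtain ys' where ys': "list_all2 (\<lambda>g v. eval g xs v) gs ys'" "eval f ys' v'"
    by (rule CompE)
  have "ys = ys'"
  proof -
    have l: "length ys = length ys'" using list_all2_lengthD[OF eval_Comp.IH(1)] list_all2_lengthD[OF ys'(1)] by simp
    show ?thesis
    proof (rule nth_equalityI[OF l])
      fix i assume "i < length ys"
      then show "ys ! i = ys' ! i" using eval_Comp.IH(1) ys'(1) unfolding list_all2_conv_all_nth by auto
    qed
  qed
  then show ?case using eval_Comp.IH(2) ys'(2) by blast
next
  case (eval_PR0 f xs v g)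
  show ?case using eval_PR0.prems eval_PR0.IH by (cases rule: eval.cases) auto
next
  case (eval_PRS f g y xs r v)
  from eval_PRS.prems obtain r' where "eval (PrimRec f g) (y # xs) r'" "eval g (y # r' # xs) v'"
    by (rule PRSE)
  then show ?case using eval_PRS.IH by metis
next
  case (eval_Mu f y xs)
  from eval_Mu.prems have p: "eval f (v' # xs) 0" "\<And>z. z < v' \<Longrightarrow> \<exists>w>0. eval f (z # xs) w"
    by (auto elim: MuE)
  show ?case
  proof (rule linorder_cases[of y v'])
    assume "y < v'"
    then obtain w where w: "w > 0" "eval f (y # xs) w" using p(2) by blast
    have "0 = w" using eval_Mu.IH(1) w(2) by simp
    then show ?thesis using w(1) by simp
  next
    assume "v' < y"
    from eval_Mu.IH(2)[OF this] obtain w where w: "w > 0" "eval f (v' # xs) w"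
      and d: "\<forall>v''. eval f (v' # xs) v'' \<longrightarrow> w = v''" by blast
    have "w = 0" using d p(1) by simp
    then show ?thesis using w(1) by simp
  qed
qed


lemma rcp_lift1: "rcp 1 (\<lambda>e. P (e 0)) \<Longrightarrow> rc n g \<Longrightarrow> rcp n (\<lambda>e. P (g e))"
  unfolding rcp_def by (rule rc_lift1[where F="\<lambda>x. if P x then 1 else 0"])

lemma rcp_lift2: "rcp 2 (\<lambda>e. P (e 0) (e 1)) \<Longrightarrow> rc n g \<Longrightarrow> rc n h \<Longrightarrow> rcp n (\<lambda>e. P (g e) (h e))"
  unfolding rcp_def by (rule rc_lift2[where F="\<lambda>x y. if P x y then 1 else 0"])

lemma rc_trip: "rc n f \<Longrightarrow> rc n g \<Longrightarrow> rc n h \<Longrightarrow> rc n (\<lambda>e. trip (f e) (g e) (h e))"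
  unfolding trip_def by (intro rc_pr)

lemma rcp_valid1: "rcp 1 (\<lambda>e. valid_c (e 0))"
  unfolding valid_c_def jst_def by (intro rc_intros2 rc_trip) simp_all

lemma rcp_valid: "rc n g \<Longrightarrow> rcp n (\<lambda>e. valid_c (g e))"
  by (rule rcp_lift1[OF rcp_valid1])

definition lastc :: "nat \<Rightarrow> nat" where "lastc L = nthc L (lenc L - 1)"
definition Hc :: "nat \<Rightarrow> nat \<Rightarrow> bool" where
  "Hc n L \<longleftrightarrow> valid_c L \<and> 0 < lenc L \<and> pf (lastc L) = n \<and> pf (ps (lastc L)) = consc n 0"
definition valc :: "nat \<Rightarrow> nat" where "valc L = ps (ps (lastc L))"

lemma rc_lastc: "rc n g \<Longrightarrow> rc n (\<lambda>e. lastc (g e))"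
  unfolding lastc_def by (intro rc_intros2)

lemma rc_valc: "rc n g \<Longrightarrow> rc n (\<lambda>e. valc (g e))"
  unfolding valc_def by (intro rc_intros2 rc_lastc)

lemma rcp_Hc: "rc n f \<Longrightarrow> rc n g \<Longrightarrow> rcp n (\<lambda>e. Hc (f e) (g e))"
  unfolding Hc_def by (intro rc_intros2 rc_lastc rcp_valid)

lemma Hc_complete:
  assumes "eval t [code t] v"
  shows "\<exists>L. Hc (code t) L \<and> valc L = v"
proof -
  let ?en = "trip (code t) (lcode [code t]) v"
  obtain Ls where Ls: "validL Ls" "?en \<in> set Ls" using completeness[OF assms] by blast
  define Ms where "Ms = Ls @ [?en]"
  have vM: "validL Ms" unfolding Ms_def by (rule validL_snoc[OF Ls(1) validL_mem_jst[OF Ls]])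
  define L where "L = lcode Ms"
  have "valid_c L" using vM by (simp add: valid_c_iff L_def)
  moreover have "lastc L = ?en" by (simp add: lastc_def L_def Ms_def nth_append)
  moreover have "0 < lenc L" by (simp add: L_def Ms_def)
  ultimately show ?thesis unfolding Hc_def valc_def by auto
qed

lemma Hc_sound:
  assumes "Hc (code t) L"
  shows "eval t [code t] (valc L)"
proof -
  have v: "validL (declist L)" "0 < length (declist L)" "pf (lastc L) = code t" "pf (ps (lastc L)) = consc (code t) 0"
    using assms by (auto simp: Hc_def valid_c_iff lenc_correct)
  have l: "lastc L = declist L ! (length (declist L) - 1)"
    unfolding lastc_def using v(2) by (simp add: lenc_correct nthc_correct)
  have "eval t (declist (pf (ps (lastc L)))) (ps (ps (lastc L)))"
    using validL_sound[OF v(1), of "length (declist L) - 1" t] v(2,3) l by simp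
  then show ?thesis using v(4) by (simp add: valc_def)
qed

definition firstc :: "nat \<Rightarrow> nat \<Rightarrow> nat" where
  "firstc n k = (\<Sum>j<Suc k. (if \<exists>L<Suc j. Hc n L then 0 else 1))"

lemma rc_firstc1: "rc 2 (\<lambda>e. firstc (e 0) (e 1))"
  unfolding firstc_def by (intro rc_intros2 rcp_Hc) simp_all

lemma rc_firstc: "rc n f \<Longrightarrow> rc n g \<Longrightarrow> rc n (\<lambda>e. firstc (f e) (g e))"
  by (rule rc_lift2[OF rc_firstc1])

lemma firstc_correct:
  assumes "\<exists>L<Suc k. Hc n L"
  shows "firstc n k = (LEAST L. Hc n L)"
proof -
  define m where "m = (LEAST L. Hc n L)"
  have hm: "Hc n m" using assms unfolding m_def by (meson LeastI)
  have mk: "m \<le> k" using assms unfolding m_def by (meson Least_le less_Suc_eq_le order_trans)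
  have iff: "(\<exists>L<Suc j. Hc n L) \<longleftrightarrow> m \<le> j" for j
  proof
    assume "\<exists>L<Suc j. Hc n L"
    then obtain L where "L < Suc j" "Hc n L" by blast
    then show "m \<le> j" unfolding m_def by (meson Least_le less_Suc_eq_le order_trans)
  next
    assume "m \<le> j" then show "\<exists>L<Suc j. Hc n L" using hm by (intro exI[of _ m]) auto
  qed
  have "firstc n k = (\<Sum>j<Suc k. (if j < m then 1 else 0))"
    unfolding firstc_def by (intro sum.cong) (auto simp: iff)
  also have "\<dots> = m" by (rule count_lt) (use mk in simp)
  finally show ?thesis unfolding m_def .
qed

definition ta :: "nat \<Rightarrow> nat" where "ta z = pf z"
definition tb :: "nat \<Rightarrow> nat" where "tb z = pf (ps z)"
definition tcc :: "nat \<Rightarrow> nat" where "tcc z = ps (ps z)"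
definition tv :: "nat \<Rightarrow> real" where "tv z = rat_code (ta z) (tb z) (tcc z)"

lemma t_sel[simp]: "ta (trip a b c) = a" "tb (trip a b c) = b" "tcc (trip a b c) = c"
  by (simp_all add: ta_def tb_def tcc_def)

lemma tv_trip: "tv (trip a b c) = (real a - real b) / (real c + 1)"
  by (simp add: tv_def rat_code_def)

definition tadd :: "nat \<Rightarrow> nat \<Rightarrow> nat" where
  "tadd z w = trip (ta z * (tcc w + 1) + ta w * (tcc z + 1)) (tb z * (tcc w + 1) + tb w * (tcc z + 1)) ((tcc z + 1) * (tcc w + 1) - 1)"
definition tneg :: "nat \<Rightarrow> nat" where "tneg z = trip (tb z) (ta z) (tcc z)"
definition tmul :: "nat \<Rightarrow> nat \<Rightarrow> nat" where
  "tmul z w = trip (ta z * ta w + tb z * tb w) (ta z * tb w + tb z * ta w) ((tcc z + 1) * (tcc w + 1) - 1)"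
definition tdiv :: "nat \<Rightarrow> nat \<Rightarrow> nat" where
  "tdiv z w = (if tb w < ta w then trip (ta z * (tcc w + 1)) (tb z * (tcc w + 1)) ((tcc z + 1) * (ta w - tb w) - 1) else trip 0 0 0)"
definition tmin :: "nat \<Rightarrow> nat \<Rightarrow> nat" where
  "tmin z w = (if ta z * (tcc w + 1) + tb w * (tcc z + 1) \<le> ta w * (tcc z + 1) + tb z * (tcc w + 1) then z else w)"
definition tdy :: "bool \<Rightarrow> nat \<Rightarrow> nat" where
  "tdy s k = trip (if s then 1 else 0) (if s then 0 else 1) (2 ^ k - 1)"

lemma tv_def2: "tv z = (real (ta z) - real (tb z)) / (real (tcc z) + 1)"
  by (simp add: tv_def rat_code_def)

lemma of_nat_prod_m1: "real ((a + 1) * (b + 1) - 1) + 1 = (real a + 1) * (real b + 1)"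
  by (simp add: of_nat_diff algebra_simps)

lemma tv_tadd: "tv (tadd z w) = tv z + tv w"
  unfolding tadd_def tv_trip of_nat_prod_m1 tv_def2
  by (simp add: field_simps)

lemma tv_tneg: "tv (tneg z) = - tv z"
  unfolding tneg_def tv_trip tv_def2 by (simp add: field_simps)

lemma tv_tmul: "tv (tmul z w) = tv z * tv w"
  unfolding tmul_def tv_trip of_nat_prod_m1 tv_def2
  by (simp add: field_simps)

lemma tv_pos_iff: "0 < tv w \<longleftrightarrow> tb w < ta w"
proof -
  have "0 < real (tcc w) + 1" by simp
  then show ?thesis unfolding tv_def2 by (simp add: divide_pos_pos zero_less_divide_iff)
qed

lemma tv_tdiv: "0 < tv w \<Longrightarrow> tv (tdiv z w) = tv z / tv w"
proof -
  assume "0 < tv w"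
  then have lt: "tb w < ta w" by (simp add: tv_pos_iff)
  have e: "real ((tcc z + 1) * (ta w - tb w) - 1) + 1 = (real (tcc z) + 1) * (real (ta w) - real (tb w))"
  proof -
    have "1 \<le> (tcc z + 1) * (ta w - tb w)" using lt by simp
    then show ?thesis using lt by (simp add: of_nat_diff algebra_simps)
  qed
  have "real (ta w) - real (tb w) \<noteq> 0" using lt by simp
  then show ?thesis using lt unfolding tdiv_def tv_trip tv_def2 e
    by (simp add: field_simps)
qed

lemma tv_tmin: "tv (tmin z w) = min (tv z) (tv w)"
proof -
  have cz: "0 < real (tcc z) + 1" and cw: "0 < real (tcc w) + 1" by simp_all
  have "(tv z \<le> tv w) \<longleftrightarrow> (real (ta z) - real (tb z)) * (real (tcc w) + 1) \<le> (real (ta w) - real (tb w)) * (real (tcc z) + 1)"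
    unfolding tv_def2 using cz cw by (simp add: divide_le_eq le_divide_eq field_simps)
  also have "\<dots> \<longleftrightarrow> ta z * (tcc w + 1) + tb w * (tcc z + 1) \<le> ta w * (tcc z + 1) + tb z * (tcc w + 1)"
  proof -
    have "(real (ta z) - real (tb z)) * (real (tcc w) + 1) \<le> (real (ta w) - real (tb w)) * (real (tcc z) + 1)
      \<longleftrightarrow> real (ta z * (tcc w + 1) + tb w * (tcc z + 1)) \<le> real (ta w * (tcc z + 1) + tb z * (tcc w + 1))"
      by (simp add: algebra_simps)
    then show ?thesis by linarith
  qed
  finally show ?thesis unfolding tmin_def by (auto simp: min_def)
qed

lemma tv_tdy: "tv (tdy s k) = (if s then 1 else -1) / 2 ^ k"
proof -
  have "real (2 ^ k - 1 :: nat) + 1 = 2 ^ k"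
  proof -
    have "(1::nat) \<le> 2 ^ k" by simp
    then show ?thesis by (simp add: of_nat_diff)
  qed
  then show ?thesis unfolding tdy_def tv_trip by simp
qed

lemma tv_zero: "tv (trip 0 0 0) = 0" by (simp add: tv_trip)

lemma rc_ta: "rc n g \<Longrightarrow> rc n (\<lambda>e. ta (g e))" unfolding ta_def by (intro rc_intros2)
lemma rc_tb: "rc n g \<Longrightarrow> rc n (\<lambda>e. tb (g e))" unfolding tb_def by (intro rc_intros2)
lemma rc_tcc: "rc n g \<Longrightarrow> rc n (\<lambda>e. tcc (g e))" unfolding tcc_def by (intro rc_intros2)
lemmas rc_intros3 = rc_intros2 rc_ta rc_tb rc_tcc rc_trip

lemma rc_tadd: "rc n f \<Longrightarrow> rc n g \<Longrightarrow> rc n (\<lambda>e. tadd (f e) (g e))"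
  unfolding tadd_def by (intro rc_intros3)
lemma rc_tneg: "rc n f \<Longrightarrow> rc n (\<lambda>e. tneg (f e))"
  unfolding tneg_def by (intro rc_intros3)
lemma rc_tmul: "rc n f \<Longrightarrow> rc n g \<Longrightarrow> rc n (\<lambda>e. tmul (f e) (g e))"
  unfolding tmul_def by (intro rc_intros3)
lemma rc_tdiv: "rc n f \<Longrightarrow> rc n g \<Longrightarrow> rc n (\<lambda>e. tdiv (f e) (g e))"
  unfolding tdiv_def by (intro rc_intros3)
lemma rc_tmin: "rc n f \<Longrightarrow> rc n g \<Longrightarrow> rc n (\<lambda>e. tmin (f e) (g e))"
  unfolding tmin_def by (intro rc_intros3)

lemma rc_pow2: "rc 1 (\<lambda>e. 2 ^ e 0)"
proof -
  have "rc (Suc 0) (\<lambda>e. prec (\<lambda>e. 1) (\<lambda>e. e 1 + e 1) (e 0) (\<lambda>i. e (Suc i)))"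
    by (rule rc_prec) (auto intro!: rc_intros)
  moreover have "prec (\<lambda>e. 1) (\<lambda>e. e 1 + e 1) y e = 2 ^ y" for y e
    by (induction y) (auto simp: econs_def)
  ultimately show ?thesis by simp
qed

lemma rc_tdy: "rcp n P \<Longrightarrow> rc n g \<Longrightarrow> rc n (\<lambda>e. tdy (P e) (g e))"
  unfolding tdy_def by (intro rc_intros3 rc_lift1[OF rc_pow2])

lemmas rc_intros4 = rc_intros3 rc_tadd rc_tneg rc_tmul rc_tdiv rc_tmin rc_tdy rc_firstc rcp_Hc rc_valc

lemma computable1_rc: "computable1 f \<longleftrightarrow> rc 1 (\<lambda>e. f (e 0))"
proof
  assume "computable1 f"
  then obtain t where t: "\<And>n. eval t [n] (f n)" unfolding computable1_def by blast
  show "rc 1 (\<lambda>e. f (e 0))" unfolding rc_def by (rule exI[of _ t]) (simp add: t)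
next
  assume "rc 1 (\<lambda>e. f (e 0))"
  then obtain t where t: "\<And>e. eval t (map e [0..<1]) (f (e 0))" unfolding rc_def by blast
  have "eval t [n] (f n)" for n using t[of "\<lambda>_. n"] by simp
  then show "computable1 f" unfolding computable1_def by blast
qed

lemma computable2_rc: "computable2 f \<longleftrightarrow> rc 2 (\<lambda>e. f (e 0) (e 1))"
proof
  assume "computable2 f"
  then obtain t where t: "\<And>m n. eval t [m, n] (f m n)" unfolding computable2_def by blast
  show "rc 2 (\<lambda>e. f (e 0) (e 1))" unfolding rc_def by (rule exI[of _ t]) (simp add: t numeral_2_eq_2)
next
  assume "rc 2 (\<lambda>e. f (e 0) (e 1))"
  then obtain t where t: "\<And>e. eval t (map e [0..<2]) (f (e 0) (e 1))" unfolding rc_def by blast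
  have "eval t [m, n] (f m n)" for m n using t[of "\<lambda>i. if i = 0 then m else n"] by (simp add: numeral_2_eq_2)
  then show "computable2 f" unfolding computable2_def by blast
qed

lemma crs_apx:
  assumes "rc 2 (\<lambda>e. q (e 0) (e 1))" "\<And>n k. \<bar>tv (q n k) - x n\<bar> \<le> 1 / 2 ^ k"
  shows "computable_real_seq x"
  unfolding computable_real_seq_def
proof (intro exI conjI allI impI)
  show "computable2 (\<lambda>n k. ta (q n k))" unfolding computable2_rc by (intro rc_intros3 assms(1))
  show "computable2 (\<lambda>n k. tb (q n k))" unfolding computable2_rc by (intro rc_intros3 assms(1))
  show "computable2 (\<lambda>n k. tcc (q n k))" unfolding computable2_rc by (intro rc_intros3 assms(1))
  show "computable2 (\<lambda>n N. N)" unfolding computable2_rc by (intro rc_intros3) simp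
  fix n N k :: nat assume "N \<le> k"
  then have "1 / 2 ^ k \<le> (1::real) / 2 ^ N" by (simp add: frac_le power_increasing)
  then show "\<bar>rat_code (ta (q n k)) (tb (q n k)) (tcc (q n k)) - x n\<bar> \<le> 1 / 2 ^ N"
    using assms(2)[of n k] unfolding tv_def by linarith
qed

lemma cr_seq_elem: "computable_real_seq x \<Longrightarrow> computable_real (x n)"
  unfolding computable_real_seq_def computable_real_def computable2_rc computable1_rc
proof (elim exE conjE)
  fix a b c e
  assume r: "rc 2 (\<lambda>e. a (e 0) (e 1))" "rc 2 (\<lambda>ea. b (ea 0) (ea 1))" "rc 2 (\<lambda>ea. c (ea 0) (ea 1))" "rc 2 (\<lambda>ea. e (ea 0) (ea 1))"
    and h: "\<forall>n N k. e n N \<le> k \<longrightarrow> \<bar>rat_code (a n k) (b n k) (c n k) - x n\<bar> \<le> 1 / 2 ^ N"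
  show "\<exists>a b c e. rc 1 (\<lambda>e. a (e 0)) \<and> rc 1 (\<lambda>ea. b (ea 0)) \<and> rc 1 (\<lambda>ea. c (ea 0)) \<and> rc 1 (\<lambda>ea. e (ea 0)) \<and>
            (\<forall>N k. e N \<le> k \<longrightarrow> \<bar>rat_code (a k) (b k) (c k) - x n\<bar> \<le> 1 / 2 ^ N)"
  proof (intro exI conjI)
    have p: "rc 1 (\<lambda>e. n)" "rc 1 (\<lambda>e. e 0)" by (auto intro: rc_const rc_proj)
    show "rc 1 (\<lambda>e'. a n (e' 0))" by (rule rc_lift2[OF r(1) p])
    show "rc 1 (\<lambda>e'. b n (e' 0))" by (rule rc_lift2[OF r(2) p])
    show "rc 1 (\<lambda>e'. c n (e' 0))" by (rule rc_lift2[OF r(3) p])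
    show "rc 1 (\<lambda>e'. e n (e' 0))" by (rule rc_lift2[OF r(4) p])
    show "\<forall>N k. e n N \<le> k \<longrightarrow> \<bar>rat_code (a n k) (b n k) (c n k) - x n\<bar> \<le> 1 / 2 ^ N" using h by blast
  qed
qed

lemma cr_apx:
  assumes "computable_real x"
  shows "\<exists>q. rc 1 (\<lambda>e. q (e 0)) \<and> (\<forall>m. \<bar>tv (q m) - x\<bar> \<le> 1 / 2 ^ m)"
proof -
  obtain a b c e where r: "computable1 a" "computable1 b" "computable1 c" "computable1 e"
    and h: "\<forall>N k. e N \<le> k \<longrightarrow> \<bar>rat_code (a k) (b k) (c k) - x\<bar> \<le> 1 / 2 ^ N"
    using assms unfolding computable_real_def by blast
  show ?thesis
  proof (intro exI conjI allI)
    show "rc 1 (\<lambda>ea. trip (a (e (ea 0))) (b (e (ea 0))) (c (e (ea 0))))"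
    proof -
      have re: "rc 1 (\<lambda>ea. e (ea 0))" using r(4) unfolding computable1_rc .
      show ?thesis using r(1-3) unfolding computable1_rc
        by (intro rc_trip rc_lift1[where F=a, OF _ re] rc_lift1[where F=b, OF _ re] rc_lift1[where F=c, OF _ re])
    qed
    fix m show "\<bar>tv (trip (a (e m)) (b (e m)) (c (e m))) - x\<bar> \<le> 1 / 2 ^ m"
      using h by (simp add: tv_def)
  qed
qed


lemma div_err:
  fixes x y r s d :: real
  assumes x: "x > 0" and y: "y > 0" and r: "\<bar>r - x\<bar> \<le> d" and s: "\<bar>s - y\<bar> \<le> d" and d: "4 * d \<le> x + y"
  shows "r + s > 0" "\<bar>r / (r + s) - x / (x + y)\<bar> \<le> 2 * d / (x + y)"
proof -
  have rs: "r + s \<ge> (x + y) / 2" using r s d by (auto simp: abs_le_iff)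
  have "(x + y) / 2 > 0" using x y by simp
  then show pos: "r + s > 0" using rs by linarith
  have eq: "r / (r + s) - x / (x + y) = ((r - x) * y - x * (s - y)) / ((r + s) * (x + y))"
    using pos x y by (simp add: field_simps)
  have num: "\<bar>(r - x) * y - x * (s - y)\<bar> \<le> d * (x + y)"
  proof -
    have "\<bar>(r - x) * y\<bar> \<le> d * y" using r y by (simp add: abs_mult mult_right_mono)
    moreover have "\<bar>x * (s - y)\<bar> \<le> x * d" using s x by (simp add: abs_mult mult_left_mono)
    moreover have "\<bar>(r - x) * y - x * (s - y)\<bar> \<le> \<bar>(r - x) * y\<bar> + \<bar>x * (s - y)\<bar>" by (rule abs_triangle_ineq4)
    ultimately have "\<bar>(r - x) * y - x * (s - y)\<bar> \<le> d * y + x * d" by linarith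
    then show ?thesis by (simp add: algebra_simps)
  qed
  have "\<bar>r / (r + s) - x / (x + y)\<bar> = \<bar>(r - x) * y - x * (s - y)\<bar> / ((r + s) * (x + y))"
    unfolding eq using pos x y by (simp add: abs_divide)
  also have "\<dots> \<le> d * (x + y) / ((r + s) * (x + y))"
    using num pos x y by (intro divide_right_mono) auto
  also have "\<dots> = d / (r + s)" using x y by simp
  also have "\<dots> \<le> d / ((x + y) / 2)"
    using rs x y pos d r by (intro divide_left_mono) (auto simp: abs_le_iff)
  also have "\<dots> = 2 * d / (x + y)" by simp
  finally show "\<bar>r / (r + s) - x / (x + y)\<bar> \<le> 2 * d / (x + y)" .
qed

lemma mul_err:
  fixes u U v V d :: real
  assumes "\<bar>u - U\<bar> \<le> d" "\<bar>v - V\<bar> \<le> d" "\<bar>U\<bar> \<le> 1" "d \<le> 1"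
  shows "\<bar>u * v - U * V\<bar> \<le> d * (\<bar>V\<bar> + 2)"
proof -
  have eq: "u * v - U * V = (u - U) * v + U * (v - V)" by (simp add: algebra_simps)
  have d0: "0 \<le> d" using assms(1) by linarith
  have "\<bar>(u - U) * v\<bar> \<le> d * (\<bar>V\<bar> + 1)"
  proof -
    have "\<bar>v\<bar> \<le> \<bar>V\<bar> + 1" using assms(2,4) by linarith
    then show ?thesis unfolding abs_mult using assms(1) d0 by (meson abs_ge_zero mult_mono)
  qed
  moreover have "\<bar>U * (v - V)\<bar> \<le> 1 * d" unfolding abs_mult using assms(2,3) by (intro mult_mono) auto
  moreover have "\<bar>(u - U) * v + U * (v - V)\<bar> \<le> \<bar>(u - U) * v\<bar> + \<bar>U * (v - V)\<bar>" by (rule abs_triangle_ineq)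
  ultimately show ?thesis unfolding eq by (simp add: algebra_simps)
qed

lemma min_err:
  fixes a A b B e :: real
  assumes "\<bar>a - A\<bar> \<le> e" "\<bar>b - B\<bar> \<le> e"
  shows "\<bar>min a b - min A B\<bar> \<le> e"
  using assms by (auto simp: min_def abs_le_iff)

lemma pow_small: "(r::real) > 0 \<Longrightarrow> \<exists>c::nat. 1 / 2 ^ c < r"
proof -
  assume r: "r > 0"
  obtain n :: nat where n: "1 / r < real n" using reals_Archimedean2 by blast
  have "real n < 2 ^ n"
  proof (induction n)
    case (Suc n)
    have "1 \<le> (2::real) ^ n" by simp
    then show ?case using Suc by (simp only: of_nat_Suc power_Suc)
  qed simp
  then have "1 / r < 2 ^ n" using n by linarith
  then show ?thesis using r by (intro exI[of _ n]) (simp add: field_simps)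
qed


definition hal :: "nat \<Rightarrow> bool" where "hal n \<longleftrightarrow> (\<exists>L. Hc n L)"
definition fstL :: "nat \<Rightarrow> nat" where "fstL n = (LEAST L. Hc n L)"
definition epsv :: "nat \<Rightarrow> nat \<Rightarrow> real" where
  "epsv c1 n = (if hal n then (if valc (fstL n) = 0 then 1 else -1) / 2 ^ (fstL n + c1) else 0)"
definition Eap :: "nat \<Rightarrow> nat \<Rightarrow> nat \<Rightarrow> nat" where
  "Eap c1 n k = (if \<exists>L<Suc k. Hc n L then tdy (valc (firstc n k) = 0) (firstc n k + c1) else trip 0 0 0)"

lemma rc_Eap1: "rc 2 (\<lambda>e. Eap c1 (e 0) (e 1))"
  unfolding Eap_def by (intro rc_intros4) simp_all

lemma rc_Eap: "rc n f \<Longrightarrow> rc n g \<Longrightarrow> rc n (\<lambda>e. Eap c1 (f e) (g e))"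
  by (rule rc_lift2[OF rc_Eap1])

lemma epsv_bound: "\<bar>epsv c1 n\<bar> \<le> 1 / 2 ^ c1"
proof -
  have "(1::real) / 2 ^ (fstL n + c1) \<le> 1 / 2 ^ c1" by (intro divide_left_mono power_increasing) auto
  then show ?thesis unfolding epsv_def by auto
qed

lemma Eap_err: "\<bar>tv (Eap c1 n k) - epsv c1 n\<bar> \<le> 1 / 2 ^ (k + 1)"
proof (cases "\<exists>L<Suc k. Hc n L")
  case True
  then have f: "firstc n k = fstL n" unfolding fstL_def by (rule firstc_correct)
  have "hal n" using True unfolding hal_def by blast
  then show ?thesis using True f unfolding Eap_def epsv_def by (simp add: tv_tdy)
next
  case False
  have "Eap c1 n k = trip 0 0 0" unfolding Eap_def using False by (rule if_not_P)
  then have e: "tv (Eap c1 n k) = 0" by (simp add: tv_zero)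
  show ?thesis
  proof (cases "hal n")
    case True
    then have "Hc n (fstL n)" unfolding hal_def fstL_def by (meson LeastI)
    then have "\<not> fstL n < Suc k" using False by blast
    then have "k + 1 \<le> fstL n" by simp
    then have "(1::real) / 2 ^ (fstL n + c1) \<le> 1 / 2 ^ (k + 1)" by (intro divide_left_mono power_increasing) auto
    then show ?thesis using e True unfolding epsv_def by auto
  next
    case False
    then show ?thesis using e unfolding epsv_def by simp
  qed
qed

locale apxs =
  fixes x y :: real and q1 q2 :: "nat \<Rightarrow> nat"
  assumes x: "x > 0" and y: "y > 0"
    and rq1: "rc 1 (\<lambda>e. q1 (e 0))" and rq2: "rc 1 (\<lambda>e. q2 (e 0))"
    and aq1: "\<And>m. \<bar>tv (q1 m) - x\<bar> \<le> 1 / 2 ^ m" and aq2: "\<And>m. \<bar>tv (q2 m) - y\<bar> \<le> 1 / 2 ^ m"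
begin

definition cdiv :: nat where "cdiv = (SOME c. 1 / 2 ^ c < (x + y) / 4)"
definition c1 :: nat where "c1 = (SOME c. 1 / 2 ^ c < min x y / (x + y))"
definition c2 :: nat where "c2 = (SOME c. 1 / 2 ^ c < 1 / (x + y + 2))"

lemma cdiv: "1 / 2 ^ cdiv < (x + y) / 4"
  unfolding cdiv_def by (rule someI_ex) (rule pow_small, use x y in simp)
lemma c1: "1 / 2 ^ c1 < min x y / (x + y)"
  unfolding c1_def by (rule someI_ex) (rule pow_small, use x y in simp)
lemma c2: "1 / 2 ^ c2 < 1 / (x + y + 2)"
  unfolding c2_def by (rule someI_ex) (rule pow_small, use x y in simp)

definition pT :: "nat \<Rightarrow> real" where "pT n = x / (x + y) + epsv c1 n"
definition pF :: "nat \<Rightarrow> real" where "pF n = y / (x + y) - epsv c1 n"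
definition Dv :: "nat \<Rightarrow> real" where "Dv n = min (pT n * y) (pF n * x)"

definition PTap :: "nat \<Rightarrow> nat \<Rightarrow> nat" where
  "PTap n k = tadd (tdiv (q1 (k + cdiv)) (tadd (q1 (k + cdiv)) (q2 (k + cdiv)))) (Eap c1 n k)"
definition PFap :: "nat \<Rightarrow> nat \<Rightarrow> nat" where
  "PFap n k = tadd (tdiv (q2 (k + cdiv)) (tadd (q1 (k + cdiv)) (q2 (k + cdiv)))) (tneg (Eap c1 n k))"
definition Dap :: "nat \<Rightarrow> nat \<Rightarrow> nat" where
  "Dap n k = tmin (tmul (PTap n (k + c2)) (q2 (k + c2))) (tmul (PFap n (k + c2)) (q1 (k + c2)))"

lemma Q1: "rc n g \<Longrightarrow> rc n (\<lambda>e. q1 (g e))" by (rule rc_lift1[OF rq1])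
lemma Q2: "rc n g \<Longrightarrow> rc n (\<lambda>e. q2 (g e))" by (rule rc_lift1[OF rq2])

lemma rc_PTap: "rc 2 (\<lambda>e. PTap (e 0) (e 1))"
  unfolding PTap_def by (intro rc_intros4 Q1 Q2 rc_Eap) simp_all
lemma rc_PFap: "rc 2 (\<lambda>e. PFap (e 0) (e 1))"
  unfolding PFap_def by (intro rc_intros4 Q1 Q2 rc_Eap) simp_all
lemma rc_Dap: "rc 2 (\<lambda>e. Dap (e 0) (e 1))"
  unfolding Dap_def by (intro rc_intros4 Q1 Q2 rc_lift2[OF rc_PTap] rc_lift2[OF rc_PFap]) simp_all

lemma divpart:
  fixes k :: nat
  shows "tv (tadd (q1 (k + cdiv)) (q2 (k + cdiv))) > 0"
    "\<bar>tv (q1 (k + cdiv)) / tv (tadd (q1 (k + cdiv)) (q2 (k + cdiv))) - x / (x + y)\<bar> \<le> 1 / 2 ^ (k + 1)"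
    "\<bar>tv (q2 (k + cdiv)) / tv (tadd (q1 (k + cdiv)) (q2 (k + cdiv))) - y / (x + y)\<bar> \<le> 1 / 2 ^ (k + 1)"
proof -
  let ?d = "1 / 2 ^ (k + cdiv) :: real"
  have dle: "?d \<le> 1 / 2 ^ cdiv" by (intro divide_left_mono power_increasing) auto
  have "?d < (x + y) / 4" using dle cdiv by (rule order_le_less_trans)
  then have d4: "4 * ?d \<le> x + y" by (simp add: less_divide_eq)
  have e1: "\<bar>tv (q1 (k + cdiv)) - x\<bar> \<le> ?d" by (rule aq1)
  have e2: "\<bar>tv (q2 (k + cdiv)) - y\<bar> \<le> ?d" by (rule aq2)
  have sum: "tv (tadd (q1 (k + cdiv)) (q2 (k + cdiv))) = tv (q1 (k + cdiv)) + tv (q2 (k + cdiv))" by (rule tv_tadd)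
  show "tv (tadd (q1 (k + cdiv)) (q2 (k + cdiv))) > 0" unfolding sum by (rule div_err(1)[OF x y e1 e2 d4])
  have bnd: "2 * ?d / (x + y) \<le> 1 / 2 ^ (k + 1)"
  proof -
    have "2 * ?d / (x + y) = (2 / 2 ^ k) * ((1 / 2 ^ cdiv) / (x + y))" by (simp add: power_add field_simps)
    also have "\<dots> \<le> (2 / 2 ^ k) * (1 / 4)"
    proof (intro mult_left_mono)
      show "1 / 2 ^ cdiv / (x + y) \<le> 1 / 4" using cdiv x y by (simp add: field_simps)
    qed simp
    also have "\<dots> = 1 / 2 ^ (k + 1)" by simp
    finally show ?thesis .
  qed
  show "\<bar>tv (q1 (k + cdiv)) / tv (tadd (q1 (k + cdiv)) (q2 (k + cdiv))) - x / (x + y)\<bar> \<le> 1 / 2 ^ (k + 1)"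
    unfolding sum using div_err(2)[OF x y e1 e2 d4] bnd by linarith
  have e: "\<bar>tv (q2 (k + cdiv)) / (tv (q2 (k + cdiv)) + tv (q1 (k + cdiv))) - y / (y + x)\<bar> \<le> 2 * ?d / (y + x)"
    using div_err(2)[OF y x e2 e1] d4 by simp
  show "\<bar>tv (q2 (k + cdiv)) / tv (tadd (q1 (k + cdiv)) (q2 (k + cdiv))) - y / (x + y)\<bar> \<le> 1 / 2 ^ (k + 1)"
    unfolding sum using e bnd by (simp add: add.commute)
qed

lemma PTap_err: "\<bar>tv (PTap n k) - pT n\<bar> \<le> 1 / 2 ^ k"
proof -
  have "tv (PTap n k) = tv (q1 (k + cdiv)) / tv (tadd (q1 (k + cdiv)) (q2 (k + cdiv))) + tv (Eap c1 n k)"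
    unfolding PTap_def tv_tadd[of "tdiv _ _"] using tv_tdiv[OF divpart(1)] by simp
  then show ?thesis using divpart(2)[of k] Eap_err[of c1 n k] unfolding pT_def by simp
qed

lemma PFap_err: "\<bar>tv (PFap n k) - pF n\<bar> \<le> 1 / 2 ^ k"
proof -
  have "tv (PFap n k) = tv (q2 (k + cdiv)) / tv (tadd (q1 (k + cdiv)) (q2 (k + cdiv))) - tv (Eap c1 n k)"
    unfolding PFap_def tv_tadd[of "tdiv _ _"] tv_tneg using tv_tdiv[OF divpart(1)] by simp
  then show ?thesis using divpart(3)[of k] Eap_err[of c1 n k] unfolding pF_def by simp
qed

lemma eps_small: "\<bar>epsv c1 n\<bar> < min x y / (x + y)" using epsv_bound[of c1 n] c1 by linarith

lemma pT_pos: "pT n > 0" and pF_pos: "pF n > 0" and pT_le1: "pT n \<le> 1" and pF_le1: "pF n \<le> 1"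
  and pTF: "pT n + pF n = 1"
proof -
  have e: "\<bar>epsv c1 n\<bar> < min x y / (x + y)" by (rule eps_small)
  have xy: "x + y > 0" using x y by simp
  have m1: "min x y / (x + y) \<le> x / (x + y)" and m2: "min x y / (x + y) \<le> y / (x + y)"
    using xy by (auto intro: divide_right_mono)
  have s: "x / (x + y) + y / (x + y) = 1" using xy by (simp add: add_divide_distrib[symmetric])
  show "pT n > 0" "pF n > 0" "pT n \<le> 1" "pF n \<le> 1" "pT n + pF n = 1"
    unfolding pT_def pF_def using e m1 m2 s by (auto simp: abs_less_iff)
qed

lemma prodpart:
  assumes "\<bar>u - U\<bar> \<le> 1 / 2 ^ (k + c2)" "\<bar>v - V\<bar> \<le> 1 / 2 ^ (k + c2)" "\<bar>U\<bar> \<le> 1" "0 < V" "V \<le> x + y"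
  shows "\<bar>u * v - U * V\<bar> \<le> 1 / 2 ^ k"
proof -
  have d1: "1 / 2 ^ (k + c2) \<le> (1::real)" by simp
  have "\<bar>u * v - U * V\<bar> \<le> 1 / 2 ^ (k + c2) * (\<bar>V\<bar> + 2)" by (rule mul_err[OF assms(1-3) d1])
  also have "\<dots> = (1 / 2 ^ k) * ((V + 2) / 2 ^ c2)" using assms(4) by (simp add: power_add field_simps)
  also have "\<dots> \<le> (1 / 2 ^ k) * 1"
  proof (intro mult_left_mono)
    have "(V + 2) / 2 ^ c2 \<le> (x + y + 2) / 2 ^ c2" using assms(5) by (intro divide_right_mono) auto
    also have "\<dots> < 1" using c2 x y by (simp add: field_simps)
    finally show "(V + 2) / 2 ^ c2 \<le> 1" by simp
  qed simp
  finally show ?thesis by simp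
qed

lemma Dap_err: "\<bar>tv (Dap n k) - Dv n\<bar> \<le> 1 / 2 ^ k"
proof -
  have a: "\<bar>tv (PTap n (k + c2)) * tv (q2 (k + c2)) - pT n * y\<bar> \<le> 1 / 2 ^ k"
    by (rule prodpart[OF PTap_err aq2]) (use pT_pos[of n] pT_le1[of n] x y in auto)
  have b: "\<bar>tv (PFap n (k + c2)) * tv (q1 (k + c2)) - pF n * x\<bar> \<le> 1 / 2 ^ k"
    by (rule prodpart[OF PFap_err aq1]) (use pF_pos[of n] pF_le1[of n] x y in auto)
  show ?thesis unfolding Dap_def tv_tmin tv_tmul Dv_def by (rule min_err[OF a b])
qed

lemma crs_pT: "computable_real_seq pT" by (rule crs_apx[OF rc_PTap PTap_err])
lemma crs_pF: "computable_real_seq pF" by (rule crs_apx[OF rc_PFap PFap_err])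
lemma crs_Dv: "computable_real_seq Dv" by (rule crs_apx[OF rc_Dap Dap_err])

lemma gap: "pT n * y - pF n * x = epsv c1 n * (x + y)"
proof -
  have "pT n * y - pF n * x = ((x / (x + y)) * y - (y / (x + y)) * x) + epsv c1 n * (x + y)"
    unfolding pT_def pF_def by (simp add: algebra_simps)
  also have "(x / (x + y)) * y - (y / (x + y)) * x = 0" by simp
  finally show ?thesis by simp
qed

end


definition Qo :: "(bool \<Rightarrow> real) \<Rightarrow> (bool \<Rightarrow> bool \<Rightarrow> real) \<Rightarrow> bool \<Rightarrow> real" where
  "Qo P W y = (\<Sum>x'\<in>UNIV. P x' * W x' y)"

definition MIt :: "(bool \<Rightarrow> real) \<Rightarrow> (bool \<Rightarrow> bool \<Rightarrow> real) \<Rightarrow> bool \<Rightarrow> bool \<Rightarrow> real" where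
  "MIt P W x y = (if P x * W x y = 0 then 0 else P x * W x y * ln (W x y / Qo P W y))"

lemma MI_sum: "mutual_info P W = (\<Sum>x\<in>UNIV. \<Sum>y\<in>UNIV. MIt P W x y)"
  unfolding mutual_info_def MIt_def Qo_def ..

lemma Qo_ge: "is_dist P \<Longrightarrow> is_channel W \<Longrightarrow> P x * W x y \<le> Qo P W y"
  unfolding Qo_def is_dist_def is_channel_def UNIV_bool by (cases x) auto

lemma MIt_ge:
  assumes "is_dist P" "is_channel W"
  shows "MIt P W x y \<ge> P x * W x y - P x * Qo P W y"
proof -
  have P0: "P x \<ge> 0" and W0: "W x y \<ge> 0" using assms unfolding is_dist_def is_channel_def by auto
  have Qge: "P x * W x y \<le> Qo P W y" by (rule Qo_ge[OF assms])
  show ?thesis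
  proof (cases "P x * W x y = 0")
    case True
    have "0 \<le> P x * Qo P W y" using P0 Qge W0 by (metis mult_nonneg_nonneg order_trans)
    then show ?thesis using True unfolding MIt_def by (simp del: mult_eq_0_iff)
  next
    case False
    then have Pp: "P x > 0" and Wp: "W x y > 0" using P0 W0 by (auto simp: less_le)
    have Qp: "Qo P W y > 0" using Qge Pp Wp by (meson mult_pos_pos less_le_trans)
    have "ln (Qo P W y / W x y) \<le> Qo P W y / W x y - 1" using Qp Wp by (intro ln_le_minus_one) simp
    then have l: "ln (W x y / Qo P W y) \<ge> 1 - Qo P W y / W x y" using Qp Wp by (simp add: ln_div)
    have "P x * W x y * ln (W x y / Qo P W y) \<ge> P x * W x y * (1 - Qo P W y / W x y)"
      using l Pp Wp by (intro mult_left_mono) auto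
    also have "P x * W x y * (1 - Qo P W y / W x y) = P x * W x y - P x * Qo P W y" using Wp by (simp add: field_simps)
    finally show ?thesis using False unfolding MIt_def by simp
  qed
qed

lemma sum_diff_zero:
  assumes "is_dist P" "is_channel W"
  shows "(\<Sum>x\<in>UNIV. \<Sum>y\<in>UNIV. P x * W x y - P x * Qo P W y) = 0"
proof -
  have p: "P False + P True = 1" and w1: "W False False + W False True = 1" and w2: "W True False + W True True = 1"
    using assms unfolding is_dist_def is_channel_def UNIV_bool by auto
  show ?thesis unfolding Qo_def UNIV_bool using p w1 w2 by simp algebra
qed

lemma MI_nonneg:
  assumes "is_dist P" "is_channel W"
  shows "mutual_info P W \<ge> 0"
proof -
  have "(\<Sum>x\<in>UNIV. \<Sum>y\<in>UNIV. P x * W x y - P x * Qo P W y) \<le> (\<Sum>x\<in>UNIV. \<Sum>y\<in>UNIV. MIt P W x y)"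
    by (intro sum_mono MIt_ge[OF assms])
  then show ?thesis using sum_diff_zero[OF assms] MI_sum by simp
qed

lemma MI_zero_imp:
  assumes d: "is_dist P" and c: "is_channel W" and z: "mutual_info P W = 0" and Px: "P x > 0"
  shows "W x y = Qo P W y"
proof -
  define f where "f = (\<lambda>x y. MIt P W x y - (P x * W x y - P x * Qo P W y))"
  have f0: "\<And>x y. f x y \<ge> 0" unfolding f_def using MIt_ge[OF d c] by simp
  have "(\<Sum>x\<in>UNIV. \<Sum>y\<in>UNIV. f x y) = 0"
    unfolding f_def using z sum_diff_zero[OF d c] MI_sum[of P W] by (simp add: sum_subtractf)
  then have "f x y = 0" using f0 unfolding UNIV_bool
    by (cases x; cases y) (auto simp: add_nonneg_eq_0_iff)
  then have eq: "MIt P W x y = P x * W x y - P x * Qo P W y" unfolding f_def by simp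
  have W0: "W x y \<ge> 0" using c unfolding is_channel_def is_dist_def by auto
  have Qge: "P x * W x y \<le> Qo P W y" by (rule Qo_ge[OF d c])
  show ?thesis
  proof (cases "W x y = 0")
    case True
    then have "P x * Qo P W y = 0" using eq unfolding MIt_def by simp
    then show ?thesis using True Px by simp
  next
    case False
    then have Wp: "W x y > 0" using W0 by simp
    have Qp: "Qo P W y > 0" using Qge Px Wp by (meson mult_pos_pos less_le_trans)
    have pw: "P x * W x y \<noteq> 0" using Px Wp by simp
    have e1: "P x * W x y * ln (W x y / Qo P W y) = P x * W x y - P x * Qo P W y"
      using eq pw unfolding MIt_def by simp
    have "ln (W x y / Qo P W y) = (P x * W x y * ln (W x y / Qo P W y)) / (P x * W x y)" using pw by simp
    also have "\<dots> = (P x * W x y - P x * Qo P W y) / (P x * W x y)" using e1 by simp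
    also have "\<dots> = 1 - Qo P W y / W x y" using Px Wp by (simp add: field_simps)
    finally have "ln (W x y / Qo P W y) = 1 - Qo P W y / W x y" .
    then have "ln (Qo P W y / W x y) = Qo P W y / W x y - 1" using Qp Wp by (simp add: ln_div)
    then have "Qo P W y / W x y = 1" using Qp Wp by (intro ln_eq_minus_one) auto
    then show ?thesis using Wp by simp
  qed
qed

lemma MI_const:
  assumes "is_dist P" "\<And>x. W x = q"
  shows "mutual_info P W = 0"
proof -
  have p: "P False + P True = 1" using assms(1) unfolding is_dist_def UNIV_bool by simp
  have Q: "Qo P W y = q y" for y
  proof -
    have "Qo P W y = (P False + P True) * q y" unfolding Qo_def UNIV_bool using assms(2) by (simp add: algebra_simps)
    then show ?thesis using p by simp
  qed
  have "MIt P W x y = 0" for x y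
    unfolding MIt_def Q using assms(2) by auto
  then show ?thesis unfolding MI_sum by simp
qed

lemma RD_zero:
  assumes "is_dist P" "is_channel W0" "exp_distortion d P W0 \<le> D" "mutual_info P W0 = 0"
  shows "rate_distortion d D P = 0"
  unfolding rate_distortion_def
proof (rule cInf_eq_minimum)
  show "0 \<in> {mutual_info P W |W. is_channel W \<and> exp_distortion d P W \<le> D}" using assms by fastforce
  fix z assume "z \<in> {mutual_info P W |W. is_channel W \<and> exp_distortion d P W \<le> D}"
  then show "0 \<le> z" using MI_nonneg[OF assms(1)] by blast
qed

definition constch :: "bool \<Rightarrow> bool \<Rightarrow> bool \<Rightarrow> real" where
  "constch c = (\<lambda>a b. if b = c then 1 else 0)"

lemma constch_channel: "is_channel (constch c)"
  unfolding is_channel_def is_dist_def constch_def UNIV_bool by auto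

lemma dist_bin: "exp_distortion (bin_dist x y) P W = P False * W False True * x + P True * W True False * y"
  unfolding exp_distortion_def bin_dist_def UNIV_bool by simp

theorem popt_bin:
  fixes x y :: real and P :: "bool \<Rightarrow> real"
  assumes dP: "is_dist P" and pF: "P False > 0" and pT: "P True > 0" and x: "x > 0" and y: "y > 0"
    and D: "D = min (P True * y) (P False * x)"
  shows "P_opt (bin_dist x y) D P \<noteq> {}"
    and "W \<in> P_opt (bin_dist x y) D P \<Longrightarrow> P True * y > P False * x \<Longrightarrow> W False False = 0"
    and "W \<in> P_opt (bin_dist x y) D P \<Longrightarrow> P True * y < P False * x \<Longrightarrow> W False False = 1"
proof -
  define c where "c = (P False * x \<le> P True * y)"
  have dc: "exp_distortion (bin_dist x y) P (constch c) \<le> D"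
    unfolding dist_bin D c_def constch_def by (auto simp: min_def)
  have mc: "mutual_info P (constch c) = 0" by (rule MI_const[OF dP]) (simp add: constch_def)
  have R0: "rate_distortion (bin_dist x y) D P = 0" by (rule RD_zero[OF dP constch_channel dc mc])
  show "P_opt (bin_dist x y) D P \<noteq> {}"
    unfolding P_opt_def R0 using constch_channel dc mc by blast
  {
    assume W: "W \<in> P_opt (bin_dist x y) D P"
    then have cW: "is_channel W" and dW: "exp_distortion (bin_dist x y) P W \<le> D" and mW: "mutual_info P W = 0"
      unfolding P_opt_def R0 by auto
    have eqF: "W False b = Qo P W b" for b by (rule MI_zero_imp[OF dP cW mW pF])
    have eqT: "W True b = Qo P W b" for b by (rule MI_zero_imp[OF dP cW mW pT])
    have same: "W True b = W False b" for b using eqF eqT by simp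
    have sum1: "W False False + W False True = 1" and nn: "W False False \<ge> 0" "W False True \<ge> 0"
      using cW unfolding is_channel_def is_dist_def UNIV_bool by auto
    have dist: "P False * (1 - W False False) * x + P True * W False False * y \<le> D"
    proof -
      have e: "W False True = 1 - W False False" using sum1 by simp
      show ?thesis using dW unfolding dist_bin same e by (simp add: algebra_simps)
    qed
    note * = dist sum1 nn
  } note W = this
  show "W \<in> P_opt (bin_dist x y) D P \<Longrightarrow> P True * y > P False * x \<Longrightarrow> W False False = 0"
  proof -
    assume "W \<in> P_opt (bin_dist x y) D P" and gt: "P True * y > P False * x"
    note w = W[OF this(1)]
    have "D = P False * x" using D gt by simp
    then have "W False False * (P True * y - P False * x) \<le> 0" using w(1) by (simp add: algebra_simps)
    then have "W False False \<le> 0" using gt by (simp add: mult_le_0_iff)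
    then show "W False False = 0" using w(3) by simp
  qed
  show "W \<in> P_opt (bin_dist x y) D P \<Longrightarrow> P True * y < P False * x \<Longrightarrow> W False False = 1"
  proof -
    assume "W \<in> P_opt (bin_dist x y) D P" and lt: "P True * y < P False * x"
    note w = W[OF this(1)]
    have "D = P True * y" using D lt by simp
    then have "(1 - W False False) * (P False * x - P True * y) \<le> 0" using w(1) by (simp add: algebra_simps)
    then have "1 - W False False \<le> 0" using lt by (simp add: mult_le_0_iff)
    moreover have "W False False \<le> 1" using w(2,4) by simp
    ultimately show "W False False = 1" by simp
  qed
qed


lemma rat_half: "rat_code a b c > 1 / 2 \<longleftrightarrow> 2 * a > 2 * b + c + 1"
proof -
  have p: "(0::real) < real c + 1" by simp
  have "rat_code a b c > 1 / 2 \<longleftrightarrow> (real a - real b) / (real c + 1) > 1 / 2" by (simp add: rat_code_def)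
  also have "\<dots> \<longleftrightarrow> 2 * (real a - real b) > real c + 1" using p by (simp add: field_simps)
  also have "\<dots> \<longleftrightarrow> real (2 * a) > real (2 * b + c + 1)" by simp linarith
  also have "\<dots> \<longleftrightarrow> 2 * a > 2 * b + c + 1" by (simp only: of_nat_less_iff)
  finally show ?thesis .
qed

theorem mainTheorem7:
  fixes d01 d10 :: real
  assumes "computable_real d01" and "computable_real d10"
    and "d01 > 0" and "d10 > 0"
  shows "\<exists>(PX :: nat \<Rightarrow> bool \<Rightarrow> real) (Dn :: nat \<Rightarrow> real).
           (\<forall>n. computable_dist (PX n)) \<and> computable_dist_seq PX \<and> computable_real_seq Dn \<and>
           (\<forall>n. P_opt (bin_dist d01 d10) (Dn n) (PX n) \<noteq> {}) \<and>
           (\<forall>F. optimal_selector (bin_dist d01 d10) F \<longrightarrow>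
                \<not> computable_channel_seq (\<lambda>n. F (PX n) (Dn n)) \<and>
                \<not> BM_computable (bin_dist d01 d10) F)"
proof -
  obtain q1 where q1: "rc 1 (\<lambda>e. q1 (e 0))" "\<And>m. \<bar>tv (q1 m) - d01\<bar> \<le> 1 / 2 ^ m"
    using cr_apx[OF assms(1)] by blast
  obtain q2 where q2: "rc 1 (\<lambda>e. q2 (e 0))" "\<And>m. \<bar>tv (q2 m) - d10\<bar> \<le> 1 / 2 ^ m"
    using cr_apx[OF assms(2)] by blast
  interpret A: apxs d01 d10 q1 q2
    by unfold_locales (use assms(3,4) q1 q2 in auto)
  define PX where "PX = (\<lambda>n b. if b then A.pT n else A.pF n)"
  define Dn where "Dn = A.Dv"
  have PXT: "PX n True = A.pT n" and PXF: "PX n False = A.pF n" for n by (simp_all add: PX_def)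
  have isd: "is_dist (PX n)" for n
    unfolding is_dist_def UNIV_bool using A.pT_pos[of n] A.pF_pos[of n] A.pTF[of n]
    by (auto simp: PX_def add.commute)
  have cseqT: "computable_real_seq (\<lambda>n. PX n True)" using A.crs_pT by (simp add: PX_def)
  have cseqF: "computable_real_seq (\<lambda>n. PX n False)" using A.crs_pF by (simp add: PX_def)
  have cdseq: "computable_dist_seq PX" unfolding computable_dist_seq_def
  proof
    fix b show "computable_real_seq (\<lambda>n. PX n b)" using cseqT cseqF by (cases b) auto
  qed
  have cd: "computable_dist (PX n)" for n unfolding computable_dist_def
  proof (intro conjI allI)
    show "is_dist (PX n)" by (rule isd)
    fix b show "computable_real (PX n b)" using cr_seq_elem[OF cseqT] cr_seq_elem[OF cseqF] by (cases b) auto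
  qed
  have cD: "computable_real_seq Dn" unfolding Dn_def by (rule A.crs_Dv)
  have Deq: "Dn n = min (PX n True * d10) (PX n False * d01)" for n
    by (simp add: Dn_def A.Dv_def PX_def)
  note pb = popt_bin[OF isd _ _ assms(3,4) Deq]
  have ne: "P_opt (bin_dist d01 d10) (Dn n) (PX n) \<noteq> {}" for n
    by (rule pb(1)) (simp_all add: PXT PXF A.pT_pos A.pF_pos)
  have main: "\<not> computable_channel_seq (\<lambda>n. F (PX n) (Dn n))" if os: "optimal_selector (bin_dist d01 d10) F" for F
  proof
    assume cc: "computable_channel_seq (\<lambda>n. F (PX n) (Dn n))"
    define W where "W n = F (PX n) (Dn n)" for n
    have Wopt: "W n \<in> P_opt (bin_dist d01 d10) (Dn n) (PX n)" for n
      using os cd[of n] cr_seq_elem[OF cD, of n] ne[of n] unfolding optimal_selector_def W_def by blast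
    have "computable_real_seq (\<lambda>n. W n False False)" using cc unfolding computable_channel_seq_def W_def by blast
    then obtain a b c e where abce: "computable2 a" "computable2 b" "computable2 c" "computable2 e"
      and apx: "\<And>n N k. e n N \<le> k \<Longrightarrow> \<bar>rat_code (a n k) (b n k) (c n k) - W n False False\<bar> \<le> 1 / 2 ^ N"
      unfolding computable_real_seq_def by blast
    define h where "h n = (if 2 * a n (e n 2) > 2 * b n (e n 2) + c n (e n 2) + 1 then 0 else (1::nat))" for n
    have "rc 1 (\<lambda>z. h (z 0))"
    proof -
      have ra: "rc 2 (\<lambda>z. a (z 0) (z 1))" "rc 2 (\<lambda>z. b (z 0) (z 1))" "rc 2 (\<lambda>z. c (z 0) (z 1))" "rc 2 (\<lambda>z. e (z 0) (z 1))"
        using abce unfolding computable2_rc by auto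
      have E: "rc 1 (\<lambda>z. e (z 0) 2)" by (rule rc_lift2[OF ra(4)]) (auto intro: rc_proj rc_const)
      show ?thesis unfolding h_def
        by (intro rc_intros rc_lift2[OF ra(1) _ E] rc_lift2[OF ra(2) _ E] rc_lift2[OF ra(3) _ E]) simp_all
    qed
    then obtain t where t: "\<And>n. eval t [n] (h n)" unfolding computable1_rc[symmetric] computable1_def by blast
    define m where "m = code t"
    obtain L where L: "Hc m L" "valc L = h m" using Hc_complete[of t "h m"] t[of m] unfolding m_def by blast
    have hal: "hal m" using L(1) unfolding hal_def by blast
    have Hf: "Hc m (fstL m)" using L(1) unfolding fstL_def by (rule LeastI)
    have "eval t [m] (valc (fstL m))" using Hc_sound[of t "fstL m"] Hf unfolding m_def by simp
    then have vf: "valc (fstL m) = h m" using eval_det t[of m] by blast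
    have posF: "0 < PX m False" and posT: "0 < PX m True" by (simp_all add: PXT PXF A.pT_pos A.pF_pos)
    define K where "K = e m 2"
    have close: "\<bar>rat_code (a m K) (b m K) (c m K) - W m False False\<bar> \<le> 1 / 4"
      using apx[of m 2 K] unfolding K_def by simp
    have hdef: "h m = (if rat_code (a m K) (b m K) (c m K) > 1 / 2 then 0 else 1)"
      unfolding h_def K_def rat_half by simp
    have g: "PX m True * d10 - PX m False * d01 = epsv A.c1 m * (d01 + d10)" using A.gap[of m] PXT PXF by simp
    show False
    proof (cases "h m = 0")
      case True
      then have "epsv A.c1 m > 0" using hal vf unfolding epsv_def by simp
      then have "epsv A.c1 m * (d01 + d10) > 0" using assms(3,4) by simp
      then have "PX m True * d10 > PX m False * d01" using g by linarith
      then have "W m False False = 0" by (rule pb(2)[OF posF posT Wopt])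
      then have "rat_code (a m K) (b m K) (c m K) \<le> 1 / 4" using close by simp
      then have "h m = 1" using hdef by simp
      then show False using True by simp
    next
      case False
      then have "epsv A.c1 m < 0" using hal vf unfolding epsv_def by simp
      then have "epsv A.c1 m * (d01 + d10) < 0" using assms(3,4) by (simp add: mult_neg_pos)
      then have "PX m True * d10 < PX m False * d01" using g by linarith
      then have "W m False False = 1" by (rule pb(3)[OF posF posT Wopt])
      then have "\<bar>rat_code (a m K) (b m K) (c m K) - 1\<bar> \<le> 1 / 4" using close by simp
      then have "rat_code (a m K) (b m K) (c m K) \<ge> 3 / 4" by linarith
      then have "h m = 0" using hdef by simp
      then show False using False by simp
    qed
  qed
  show ?thesis
  proof (intro exI conjI allI impI)
    show "\<And>n. computable_dist (PX n)" by (rule cd)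
    show "computable_dist_seq PX" by (rule cdseq)
    show "computable_real_seq Dn" by (rule cD)
    show "\<And>n. P_opt (bin_dist d01 d10) (Dn n) (PX n) \<noteq> {}" by (rule ne)
    fix F assume os: "optimal_selector (bin_dist d01 d10) F"
    show "\<not> computable_channel_seq (\<lambda>n. F (PX n) (Dn n))" by (rule main[OF os])
    show "\<not> BM_computable (bin_dist d01 d10) F"
    proof
      assume "BM_computable (bin_dist d01 d10) F"
      then have "computable_channel_seq (\<lambda>n. F (PX n) (Dn n))"
        unfolding BM_computable_def using isd ne cdseq cD by blast
      then show False using main[OF os] by blast
    qed
  qed
qed


end
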